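(* Let $N=2$ and let $k\in\mathbb{R}$, $k\ge1$. Then $$\lim_{p\to+\infty}\lambda_1(B_1^{\pi/k};p)^{1/p}=\frac{1+\sin\left(\frac{\pi}{2k}\right)}{\sin\left(\frac{\pi}{2k}\right)}.$$ In particular $\lim_{p\to+\infty}\tau_k(p)^{1/p}=\frac{1+\sin(\pi/(2k))}{\sin(\pi/(2k))}$ for all $k\in\mathbb{N}$, and $\lim_{p\to+\infty}\tau_1(p)^{1/p}=2$, $\lim_{p\to+\infty}\tau_2(p)^{1/p}\approx2.41421$, $\lim_{p\to+\infty}\tau_3(p)^{1/p}=3$.
   Context: For a bounded domain $\Omega\subset\mathbb{R}^2$ and $p>1$, $\lambda_1(\Omega;p)=\inf\{\int_\Omega|\nabla u|^p\,dx:u\in W_0^{1,p}(\Omega),\ \|u\|_{L^p(\Omega)}=1\}$ is the first Dirichlet eigenvalue of the $p$-Laplacian. For real $k\ge1$, $B_1^{\pi/k}=\{(\rho\cos\theta,\rho\sin\theta):0<\rho<1,\ 0<\theta<\pi/k\}$; for $k\in\mathbb{N}$, $\tau_k(p)=\lambda_1(B_1^{\pi/k};p)$. *)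

theory Defs
  imports "HOL-Analysis.Analysis"
begin

definition grad :: "(real \<times> real \<Rightarrow> real) \<Rightarrow> real \<times> real \<Rightarrow> real \<times> real" where
  "grad u x = (frechet_derivative u (at x) (1, 0), frechet_derivative u (at x) (0, 1))"

definition Cc1 :: "(real \<times> real) set \<Rightarrow> (real \<times> real \<Rightarrow> real) set" where
  "Cc1 \<Omega> = {\<phi>. (\<forall>x. \<phi> differentiable (at x)) \<and> continuous_on UNIV (grad \<phi>)
      \<and> compact (closure {x. \<phi> x \<noteq> 0}) \<and> closure {x. \<phi> x \<noteq> 0} \<subseteq> \<Omega>}"

text \<open>W_0^{1,p}(\<Omega>) as the closure of the test functions in the W^{1,p} norm:
  \<open>W01p \<Omega> p u g\<close> means u \<in> W_0^{1,p}(\<Omega>) (extended by zero) with weak gradient g.\<close>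
definition W01p :: "(real \<times> real) set \<Rightarrow> real \<Rightarrow> (real \<times> real \<Rightarrow> real)
    \<Rightarrow> (real \<times> real \<Rightarrow> real \<times> real) \<Rightarrow> bool" where
  "W01p \<Omega> p u g \<longleftrightarrow>
     u \<in> borel_measurable lborel \<and> g \<in> borel_measurable lborel \<and>
     integrable lborel (\<lambda>x. \<bar>u x\<bar> powr p) \<and> integrable lborel (\<lambda>x. norm (g x) powr p) \<and>
     (\<exists>\<phi>. (\<forall>n. \<phi> n \<in> Cc1 \<Omega>) \<and>
        (\<forall>n. integrable lborel (\<lambda>x. \<bar>\<phi> n x - u x\<bar> powr p)) \<and>
        (\<forall>n. integrable lborel (\<lambda>x. norm (grad (\<phi> n) x - g x) powr p)) \<and>
        (\<lambda>n. \<integral>x. \<bar>\<phi> n x - u x\<bar> powr p \<partial>lborel) \<longlonglongrightarrow> 0 \<and>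
        (\<lambda>n. \<integral>x. norm (grad (\<phi> n) x - g x) powr p \<partial>lborel) \<longlonglongrightarrow> 0)"

definition lambda1 :: "(real \<times> real) set \<Rightarrow> real \<Rightarrow> real" where
  "lambda1 \<Omega> p = Inf {(\<integral>x. norm (g x) powr p \<partial>lborel) | u g.
      W01p \<Omega> p u g \<and> (\<integral>x. \<bar>u x\<bar> powr p \<partial>lborel) = 1}"

definition sector :: "real \<Rightarrow> (real \<times> real) set" where
  "sector k = {(\<rho> * cos \<theta>, \<rho> * sin \<theta>) | \<rho> \<theta>. 0 < \<rho> \<and> \<rho> < 1 \<and> 0 < \<theta> \<and> \<theta> < pi / k}"

end

theory Submission
  imports Defs
begin


lemma tangent1:
  fixes x p :: real assumes "x \<ge> 0" "p \<ge> 1"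
  shows "x powr p \<ge> 1 + p * (x - 1)"
proof (cases "x = 0")
  case True then show ?thesis using assms by simp
next
  case False
  then have x: "x > 0" using assms by simp
  have "p * (x - 1) \<le> x powr p - 1 powr p"
    using x assms
    by (intro convex_on_imp_above_tangent[where A = "{0<..}", OF powr_convex])
       (auto intro!: derivative_eq_intros simp: interior_open)
  then show ?thesis by simp
qed

lemma tangent:
  fixes a z p :: real assumes "a \<ge> 0" "z > 0" "p \<ge> 1"
  shows "a powr p \<ge> z powr p + p * z powr (p - 1) * (a - z)"
proof -
  have "(a/z) powr p \<ge> 1 + p * (a/z - 1)" using tangent1 assms by simp
  then have "z powr p * (a/z) powr p \<ge> z powr p * (1 + p * (a/z - 1))"
    using assms by (intro mult_left_mono) auto
  moreover have "z powr p * (a/z) powr p = a powr p"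
    using assms by (simp add: powr_divide)
  moreover have "z powr p * (1 + p * (a/z - 1)) = z powr p + p * z powr (p - 1) * (a - z)"
    using assms by (simp add: powr_diff field_simps)
  ultimately show ?thesis by simp
qed

lemma young1:
  fixes a l p :: real assumes "a \<ge> 0" "l > 0" "p \<ge> 1"
  shows "a \<le> (a powr p * l powr (1 - p)) / p + l * (p - 1) / p"
proof -
  have "a powr p \<ge> l powr p + p * l powr (p - 1) * (a - l)" using tangent assms by simp
  then have "l powr (1-p) * a powr p \<ge> l powr (1-p) * (l powr p + p * l powr (p - 1) * (a - l))"
    using assms by (intro mult_left_mono) auto
  also have "l powr (1-p) * (l powr p + p * l powr (p - 1) * (a - l)) = l + p * (a - l)"
    using assms by (simp add: algebra_simps flip: powr_add)
  finally have H: "l + p * (a - l) \<le> l powr (1-p) * a powr p" .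
  have "p*a \<le> a powr p * l powr (1-p) + l*(p-1)" using H by (simp add: algebra_simps)
  then have "(p*a)/p \<le> (a powr p * l powr (1-p) + l*(p-1))/p"
    using assms by (intro divide_right_mono) auto
  then show ?thesis using assms by (simp add: add_divide_distrib)
qed

lemma convex2:
  fixes x y t p :: real assumes "x \<ge> 0" "y \<ge> 0" "0 < t" "t < 1" "p \<ge> 1"
  shows "(x + y) powr p \<le> t powr (1 - p) * x powr p + (1 - t) powr (1 - p) * y powr p"
proof (cases "x + y = 0")
  case True then show ?thesis using assms by auto
next
  case False
  define z where "z = x + y"
  have z: "z > 0" using False assms z_def by auto
  have A: "(x/t) powr p \<ge> z powr p + p * z powr (p - 1) * (x/t - z)"
    using tangent assms z by simp
  have B: "(y/(1-t)) powr p \<ge> z powr p + p * z powr (p - 1) * (y/(1-t) - z)"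
    using tangent assms z by simp
  have A': "t * (x/t) powr p \<ge> t * (z powr p + p * z powr (p - 1) * (x/t - z))"
    using A assms by (intro mult_left_mono) auto
  have B': "(1-t) * (y/(1-t)) powr p \<ge> (1-t) * (z powr p + p * z powr (p - 1) * (y/(1-t) - z))"
    using B assms by (intro mult_left_mono) auto
  have e1: "t * (x/t) powr p = t powr (1 - p) * x powr p"
    using assms by (simp add: powr_divide powr_diff field_simps)
  have e2: "(1-t) * (y/(1-t)) powr p = (1-t) powr (1 - p) * y powr p"
    using assms by (simp add: powr_divide powr_diff field_simps)
  have "t * (z powr p + p * z powr (p - 1) * (x/t - z)) + (1-t) * (z powr p + p * z powr (p - 1) * (y/(1-t) - z))
        = z powr p + p * z powr (p - 1) * (x + y - z)"
    using assms by (simp add: field_simps)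
  also have "\<dots> = z powr p" by (simp add: z_def)
  finally have C: "t * (z powr p + p * z powr (p - 1) * (x / t - z)) +
     (1 - t) * (z powr p + p * z powr (p - 1) * (y / (1 - t) - z)) = z powr p" .
  have "z powr p \<le> t powr (1 - p) * x powr p + (1 - t) powr (1 - p) * y powr p"
    using A' B' e1 e2 C by linarith
  then show ?thesis by (simp add: z_def)
qed


lemma holder1:
  fixes f :: "real \<Rightarrow> real" and r p :: real
  assumes cf: "continuous_on {0..r} f" and nn: "\<And>s. s \<in> {0..r} \<Longrightarrow> f s \<ge> 0"
    and r: "r > 0" and p: "p \<ge> 1"
  shows "(integral {0..r} f) powr p \<le> r powr (p - 1) * integral {0..r} (\<lambda>s. f s powr p)"
proof -
  define I1 where "I1 = integral {0..r} f"
  define Ip where "Ip = integral {0..r} (\<lambda>s. f s powr p)"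
  have int1: "f integrable_on {0..r}" using cf integrable_continuous_interval by blast
  have cfp: "continuous_on {0..r} (\<lambda>s. f s powr p)"
    using cf nn p by (intro continuous_on_powr') (auto intro: continuous_on_const)
  have intp: "(\<lambda>s. f s powr p) integrable_on {0..r}" using cfp integrable_continuous_interval by blast
  have I1nn: "I1 \<ge> 0" unfolding I1_def using int1 nn by (intro integral_nonneg) auto
  have Ipnn: "Ip \<ge> 0" unfolding Ip_def using intp by (intro integral_nonneg) auto
  have key: "I1 \<le> l powr (1 - p) / p * Ip + l * (p - 1) / p * r" if l: "l > 0" for l
  proof -
    have "I1 \<le> integral {0..r} (\<lambda>s. (f s powr p * l powr (1 - p)) / p + l * (p - 1) / p)"
      unfolding I1_def
      using int1 intp nn l p
      by (intro integral_le) (auto intro!: integrable_add integrable_divide integrable_mult_left young1)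
    also have "\<dots> = l powr (1 - p) / p * Ip + l * (p - 1) / p * r"
    proof -
      have i2: "(\<lambda>s. f s powr p * l powr (1 - p) / p) integrable_on {0..r}"
        using integrable_on_cmult_right[OF intp, of "l powr (1-p)"] by (intro integrable_on_divide) simp
      show ?thesis using r unfolding Ip_def
        by (subst integral_add[OF i2]) (auto simp: integral_divide algebra_simps)
    qed
    finally show ?thesis .
  qed
  show ?thesis
  proof (cases "Ip = 0")
    case True
    have "I1 = 0"
    proof (rule ccontr)
      assume "I1 \<noteq> 0"
      then have "I1 > 0" using I1nn by simp
      then have "I1 \<le> (I1 / r) * (p - 1) / p * r" using key[of "I1 / r"] True r by simp
      also have "\<dots> = I1 * ((p - 1) / p)" using r by simp
      also have "\<dots> < I1" using \<open>I1 > 0\<close> p by (simp add: field_simps)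
      finally show False by simp
    qed
    then show ?thesis using True unfolding I1_def Ip_def using p by simp
  next
    case False
    then have Ipp: "Ip > 0" using Ipnn by simp
    define l where "l = (Ip / r) powr (1 / p)"
    have l: "l > 0" using Ipp r l_def by simp
    have lp: "l powr p = Ip / r" unfolding l_def using Ipp r p by (simp add: powr_powr)
    have "l powr (1 - p) = l / l powr p" using l by (simp add: powr_diff)
    then have "l powr (1 - p) * Ip = l * r" using lp Ipp r by simp
    then have "I1 \<le> l * r / p + l * (p - 1) / p * r" using key[OF l] by (simp add: field_simps)
    also have "\<dots> = l * r" using p by (simp add: field_simps)
    finally have "I1 \<le> l * r" .
    then have "I1 powr p \<le> (l * r) powr p" using I1nn p by (intro powr_mono2) auto
    also have "\<dots> = l powr p * r powr p" using l r by (simp add: powr_mult)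
    also have "\<dots> = r powr (p - 1) * Ip" using lp r by (simp add: powr_diff)
    finally show ?thesis unfolding I1_def Ip_def .
  qed
qed


lemma grad_deriv:
  assumes "\<phi> differentiable (at x)"
  shows "(\<phi> has_derivative (\<lambda>v. grad \<phi> x \<bullet> v)) (at x)"
proof -
  let ?D = "frechet_derivative \<phi> (at x)"
  have D: "(\<phi> has_derivative ?D) (at x)" using assms frechet_derivative_works by blast
  then have lin: "linear ?D" using has_derivative_linear by blast
  have "?D v = grad \<phi> x \<bullet> v" for v
  proof -
    obtain a b where v: "v = (a, b)" by (cases v)
    have "v = a *\<^sub>R (1, 0) + b *\<^sub>R (0, 1)" using v by simp
    then have "?D v = ?D (a *\<^sub>R (1, 0) + b *\<^sub>R (0, 1))" by simp
    also have "\<dots> = a *\<^sub>R ?D (1, 0) + b *\<^sub>R ?D (0, 1)"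
      by (simp only: linear_add[OF lin] linear_cmul[OF lin])
    finally have "?D v = a * ?D (1, 0) + b * ?D (0, 1)" by simp
    then show ?thesis by (simp add: grad_def v inner_prod_def)
  qed
  then have "?D = (\<lambda>v. grad \<phi> x \<bullet> v)" by auto
  then show ?thesis using D by simp
qed

lemma grad_eq:
  assumes "(\<phi> has_derivative D) (at x)"
  shows "grad \<phi> x = (D (1, 0), D (0, 1))"
  using frechet_derivative_at[OF assms] by (simp add: grad_def)

lemma ftc_line:
  fixes \<phi> :: "real \<times> real \<Rightarrow> real"
  assumes dif: "\<And>y. \<phi> differentiable (at y)" and cg: "continuous_on UNIV (grad \<phi>)"
    and n: "norm n = 1" and r: "r > 0"
  shows "\<bar>\<phi> x - \<phi> (x - r *\<^sub>R n)\<bar> \<le> integral {0..r} (\<lambda>s. norm (grad \<phi> (x - s *\<^sub>R n)))"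
proof -
  have cl: "continuous_on {0..r} (\<lambda>s. grad \<phi> (x - s *\<^sub>R n))"
    by (rule continuous_on_compose2[OF cg]) (auto intro!: continuous_intros)
  have vd: "((\<lambda>s. \<phi> (x - s *\<^sub>R n)) has_vector_derivative (grad \<phi> (x - s *\<^sub>R n) \<bullet> (- n))) (at s within {0..r})" for s
  proof -
    have "((\<lambda>s. x - s *\<^sub>R n) has_derivative (\<lambda>t. - (t *\<^sub>R n))) (at s)"
      by (auto intro!: derivative_eq_intros)
    from has_derivative_compose[OF this grad_deriv[OF dif]]
    have "((\<lambda>s. \<phi> (x - s *\<^sub>R n)) has_derivative (\<lambda>t. t *\<^sub>R (grad \<phi> (x - s *\<^sub>R n) \<bullet> (- n)))) (at s)"
      by (simp add: inner_scaleR_right)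
    then show ?thesis unfolding has_vector_derivative_def by (rule has_derivative_at_withinI)
  qed
  have "((\<lambda>s. grad \<phi> (x - s *\<^sub>R n) \<bullet> (- n)) has_integral (\<phi> (x - r *\<^sub>R n) - \<phi> (x - 0 *\<^sub>R n))) {0..r}"
    using r vd by (intro fundamental_theorem_of_calculus) auto
  then have hi: "((\<lambda>s. grad \<phi> (x - s *\<^sub>R n) \<bullet> (- n)) has_integral (\<phi> (x - r *\<^sub>R n) - \<phi> x)) {0..r}"
    unfolding scale_zero_left diff_zero .
  then have eq: "integral {0..r} (\<lambda>s. grad \<phi> (x - s *\<^sub>R n) \<bullet> (- n)) = \<phi> (x - r *\<^sub>R n) - \<phi> x"
    and ii: "(\<lambda>s. grad \<phi> (x - s *\<^sub>R n) \<bullet> (- n)) integrable_on {0..r}"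
    by (auto intro: integral_unique has_integral_integrable simp del: inner_minus_right)
  have "norm (integral {0..r} (\<lambda>s. grad \<phi> (x - s *\<^sub>R n) \<bullet> (- n))) \<le> integral {0..r} (\<lambda>s. norm (grad \<phi> (x - s *\<^sub>R n)))"
  proof (rule integral_norm_bound_integral[OF ii])
    show "(\<lambda>s. norm (grad \<phi> (x - s *\<^sub>R n))) integrable_on {0..r}"
      using cl by (intro integrable_continuous_interval continuous_on_norm)
    fix s assume "s \<in> {0..r}"
    have "\<bar>grad \<phi> (x - s *\<^sub>R n) \<bullet> (- n)\<bar> \<le> norm (grad \<phi> (x - s *\<^sub>R n)) * norm (- n)"
      by (rule Cauchy_Schwarz_ineq2)
    then show "norm (grad \<phi> (x - s *\<^sub>R n) \<bullet> (- n)) \<le> norm (grad \<phi> (x - s *\<^sub>R n))"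
      using n by simp
  qed
  then show ?thesis using eq by (simp add: abs_minus_commute)
qed


lemma sector_mem: "y \<in> sector k \<longleftrightarrow> (\<exists>\<rho> \<theta>. y = (\<rho> * cos \<theta>, \<rho> * sin \<theta>) \<and> 0 < \<rho> \<and> \<rho> < 1 \<and> 0 < \<theta> \<and> \<theta> < pi / k)"
  unfolding sector_def by blast

lemma sector_props:
  assumes k: "k \<ge> 1" and y: "y \<in> sector k"
  shows "snd y > 0" "fst y * sin (pi/k) - snd y * cos (pi/k) > 0"
    "fst y * cos (pi/(2*k)) + snd y * sin (pi/(2*k)) < 1"
proof -
  obtain \<rho> \<theta> where yy: "y = (\<rho> * cos \<theta>, \<rho> * sin \<theta>)" "0 < \<rho>" "\<rho> < 1" "0 < \<theta>" "\<theta> < pi / k"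
    using y sector_mem by blast
  have pk: "pi / k \<le> pi" using k by (simp add: field_simps)
  have "sin \<theta> > 0" using yy pk by (intro sin_gt_zero) auto
  then show "snd y > 0" using yy by simp
  have "sin (pi/k - \<theta>) > 0" using yy pk by (intro sin_gt_zero) auto
  moreover have "fst y * sin (pi/k) - snd y * cos (pi/k) = \<rho> * sin (pi/k - \<theta>)"
    using yy by (simp add: sin_diff algebra_simps)
  ultimately show "fst y * sin (pi/k) - snd y * cos (pi/k) > 0" using yy by simp
  have "fst y * cos (pi/(2*k)) + snd y * sin (pi/(2*k)) = \<rho> * cos (\<theta> - pi/(2*k))"
    using yy by (simp add: cos_diff algebra_simps)
  also have "\<dots> \<le> \<rho>" using yy by (simp add: mult_left_le)
  finally show "fst y * cos (pi/(2*k)) + snd y * sin (pi/(2*k)) < 1" using yy by simp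
qed

definition sb :: "real \<Rightarrow> real" where "sb k = sin (pi / (2 * k))"
definition rr :: "real \<Rightarrow> real" where "rr k = sb k / (1 + sb k)"
definition dir :: "real \<Rightarrow> nat \<Rightarrow> real \<times> real" where
  "dir k i = (if i = 0 then (0, 1) else if i = 1 then (sin (pi/k), - cos (pi/k))
              else (- cos (pi/(2*k)), - sin (pi/(2*k))))"

lemma sb_pos: assumes "k \<ge> 1" shows "sb k > 0" "sb k \<le> 1"
proof -
  have "pi / (2*k) \<le> pi/2" using assms by (simp add: field_simps)
  moreover have "pi / (2*k) > 0" using assms by simp
  ultimately show "sb k > 0" unfolding sb_def by (intro sin_gt_zero) auto
  show "sb k \<le> 1" unfolding sb_def by simp
qed

lemma rr_pos: assumes "k \<ge> 1" shows "rr k > 0"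
  using sb_pos[OF assms] by (simp add: rr_def)

lemma dir_norm: "norm (dir k i) = 1"
  by (auto simp: dir_def norm_Pair)

lemma geo:
  assumes k: "k \<ge> 1" and x: "x \<in> sector k"
  shows "\<exists>i<3. x - rr k *\<^sub>R dir k i \<notin> sector k"
proof (rule ccontr)
  assume "\<not> ?thesis"
  then have A: "x - rr k *\<^sub>R dir k 0 \<in> sector k" and B: "x - rr k *\<^sub>R dir k 1 \<in> sector k"
    and C: "x - rr k *\<^sub>R dir k 2 \<in> sector k" by auto
  obtain \<rho> \<theta> where xx: "x = (\<rho> * cos \<theta>, \<rho> * sin \<theta>)" "0 < \<rho>" "\<rho> < 1" "0 < \<theta>" "\<theta> < pi / k"
    using x sector_mem by blast
  define b where "b = pi / (2*k)"
  have pk: "pi / k = 2 * b" unfolding b_def by simp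
  define r where "r = rr k"
  define s where "s = sb k"
  have s: "s > 0" unfolding s_def using sb_pos k by auto
  have rs: "r * (1 + s) = s" unfolding r_def rr_def s_def using s s_def by (simp add: field_simps)
  have a1: "\<rho> * sin \<theta> - r > 0" using sector_props(1)[OF k A] xx by (simp add: dir_def r_def)
  have a2: "\<rho> * sin (2*b - \<theta>) - r > 0"
  proof -
    have "fst (x - rr k *\<^sub>R dir k 1) * sin (pi/k) - snd (x - rr k *\<^sub>R dir k 1) * cos (pi/k) > 0"
      using sector_props(2)[OF k B] .
    also have "fst (x - rr k *\<^sub>R dir k 1) * sin (pi/k) - snd (x - rr k *\<^sub>R dir k 1) * cos (pi/k)
       = \<rho> * sin (2*b - \<theta>) - r * (sin (2*b) ^ 2 + cos (2*b) ^ 2)"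
      using xx pk by (simp add: dir_def r_def sin_diff algebra_simps power2_eq_square)
        (metis sin_cos_squared_add3 ring_distribs(1) mult_1_right)
    also have "\<dots> = \<rho> * sin (2*b - \<theta>) - r" by simp
    finally show ?thesis by simp
  qed
  have a3: "\<rho> * cos (\<theta> - b) + r < 1"
  proof -
    have "fst (x - rr k *\<^sub>R dir k 2) * cos (pi/(2*k)) + snd (x - rr k *\<^sub>R dir k 2) * sin (pi/(2*k)) < 1"
      using sector_props(3)[OF k C] .
    also have "fst (x - rr k *\<^sub>R dir k 2) * cos (pi/(2*k)) + snd (x - rr k *\<^sub>R dir k 2) * sin (pi/(2*k))
       = \<rho> * cos (\<theta> - b) + r * (sin b ^ 2 + cos b ^ 2)"
      using xx by (simp add: dir_def r_def b_def cos_diff algebra_simps power2_eq_square)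
        (metis sin_cos_squared_add3 ring_distribs(1) mult_1_right add.commute)
    finally show ?thesis by simp
  qed
  have id: "sin \<theta> + sin (2*b - \<theta>) = 2 * s * cos (\<theta> - b)"
  proof -
    have d1: "sin (2*b) = 2 * sin b * cos b" by (simp add: sin_double)
    have d2: "cos (2*b) = 1 - 2 * (sin b)^2" by (simp add: cos_double_sin)
    show ?thesis unfolding s_def sb_def b_def[symmetric] sin_diff cos_diff d1 d2
      by (simp add: algebra_simps power2_eq_square)
  qed
  have "2 * r < \<rho> * sin \<theta> + \<rho> * sin (2*b - \<theta>)" using a1 a2 by simp
  also have "\<dots> = 2 * s * (\<rho> * cos (\<theta> - b))" using arg_cong[OF id, of "\<lambda>t. \<rho> * t"] by (simp add: algebra_simps)
  also have "\<dots> \<le> 2 * s * (1 - r)" using a3 s by (intro mult_left_mono) auto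
  also have "\<dots> = 2 * r" using rs by (simp add: algebra_simps)
  finally show False by simp
qed


lemma Cc1_D:
  assumes "\<phi> \<in> Cc1 \<Omega>"
  shows "\<And>x. \<phi> differentiable (at x)" "continuous_on UNIV (grad \<phi>)"
    "compact (closure {x. \<phi> x \<noteq> 0})" "closure {x. \<phi> x \<noteq> 0} \<subseteq> \<Omega>"
  using assms unfolding Cc1_def by auto

lemma Cc1_cont: assumes "\<phi> \<in> Cc1 \<Omega>" shows "continuous_on UNIV \<phi>"
proof (rule continuous_at_imp_continuous_on, rule ballI)
  fix x :: "real \<times> real"
  have "\<phi> differentiable (at x)" using Cc1_D(1)[OF assms] .
  then show "isCont \<phi> x" by (rule differentiable_imp_continuous_within)
qed

lemma Cc1_zero: assumes "\<phi> \<in> Cc1 \<Omega>" "x \<notin> closure {x. \<phi> x \<noteq> 0}" shows "\<phi> x = 0"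
proof (rule ccontr)
  assume "\<phi> x \<noteq> 0"
  then have "x \<in> {x. \<phi> x \<noteq> 0}" by simp
  then show False using closure_subset assms(2) by (metis subsetD)
qed

lemma Cc1_grad_zero:
  assumes "\<phi> \<in> Cc1 \<Omega>" "x \<notin> closure {x. \<phi> x \<noteq> 0}"
  shows "grad \<phi> x = 0"
proof -
  let ?K = "closure {x. \<phi> x \<noteq> 0}"
  have "open (- ?K)" by (intro open_Compl closed_closure)
  have d0: "((\<lambda>_. 0::real) has_derivative (\<lambda>_. 0)) (at x)" by (rule has_derivative_const)
  have "(\<phi> has_derivative (\<lambda>_. 0)) (at x)"
  proof (rule has_derivative_transform_within_open[OF d0 \<open>open (- ?K)\<close>])
    show "x \<in> - ?K" using assms(2) by (simp only: Compl_iff not_False_eq_True)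
    fix y assume "y \<in> - ?K" then have "y \<notin> ?K" by (rule ComplD)
    then show "0 = \<phi> y" using Cc1_zero[OF assms(1)] by metis
  qed
  from grad_eq[OF this] have "grad \<phi> x = (0, 0)" by simp
  then show ?thesis by (simp only: zero_prod_def)
qed

lemma integrable_cs:
  fixes f :: "real \<times> real \<Rightarrow> real"
  assumes "continuous_on UNIV f" "compact K" "\<And>x. x \<notin> K \<Longrightarrow> f x = 0"
  shows "integrable lborel f"
proof -
  have "integrable lborel (\<lambda>x. indicat_real K x *\<^sub>R f x)"
    using assms by (intro borel_integrable_compact) (auto intro: continuous_on_subset)
  also have "(\<lambda>x. indicat_real K x *\<^sub>R f x) = f" using assms(3) by (auto simp: indicator_def fun_eq_iff)
  finally show ?thesis .
qed

lemma Cc1_int: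
  assumes "\<phi> \<in> Cc1 \<Omega>" "p > 0"
  shows "integrable lborel (\<lambda>x. \<bar>\<phi> x\<bar> powr p)" "integrable lborel (\<lambda>x. norm (grad \<phi> x) powr p)"
    "continuous_on UNIV (\<lambda>x. norm (grad \<phi> x) powr p)"
proof -
  have cg: "continuous_on UNIV (\<lambda>x. norm (grad \<phi> x))"
    using Cc1_D(2)[OF assms(1)] by (rule continuous_on_norm)
  show c: "continuous_on UNIV (\<lambda>x. norm (grad \<phi> x) powr p)"
    by (rule continuous_on_powr'[OF cg continuous_on_const]) (simp add: assms(2))
  have cf: "continuous_on UNIV (\<lambda>x. \<bar>\<phi> x\<bar>)"
    using Cc1_cont[OF assms(1)] by (rule continuous_on_rabs)
  have c2: "continuous_on UNIV (\<lambda>x. \<bar>\<phi> x\<bar> powr p)"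
    by (rule continuous_on_powr'[OF cf continuous_on_const]) (simp add: assms(2))
  show "integrable lborel (\<lambda>x. norm (grad \<phi> x) powr p)"
  proof (rule integrable_cs[OF c Cc1_D(3)[OF assms(1)]])
    fix x assume "x \<notin> closure {x. \<phi> x \<noteq> 0}"
    from Cc1_grad_zero[OF assms(1) this] show "norm (grad \<phi> x) powr p = 0" by simp
  qed
  show "integrable lborel (\<lambda>x. \<bar>\<phi> x\<bar> powr p)"
  proof (rule integrable_cs[OF c2 Cc1_D(3)[OF assms(1)]])
    fix x assume "x \<notin> closure {x. \<phi> x \<noteq> 0}"
    from Cc1_zero[OF assms(1) this] show "\<bar>\<phi> x\<bar> powr p = 0" by simp
  qed
qed

lemma meas_test:
  fixes G :: "real \<times> real \<Rightarrow> real" and n :: "real \<times> real"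
  assumes "continuous_on UNIV G"
  shows "(\<lambda>z. ennreal (indicator {0..r} (snd z) * G (fst z - snd z *\<^sub>R n))) \<in> borel_measurable (lborel \<Otimes>\<^sub>M lborel)"
proof -
  have "continuous_on UNIV (\<lambda>z::(real\<times>real)\<times>real. fst z - snd z *\<^sub>R n)"
    by (intro continuous_intros)
  then have "continuous_on UNIV (\<lambda>z::(real\<times>real)\<times>real. G (fst z - snd z *\<^sub>R n))"
    by (rule continuous_on_compose2[OF assms]) auto
  then have m: "(\<lambda>z::(real\<times>real)\<times>real. G (fst z - snd z *\<^sub>R n)) \<in> borel_measurable borel"
    by (rule borel_measurable_continuous_onI)
  have eq: "(\<lambda>z::(real\<times>real)\<times>real. indicator {0..r} (snd z) :: real) = indicator (UNIV \<times> {0..r})"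
    by (auto simp: indicator_def fun_eq_iff)
  have "(indicator (UNIV \<times> {0..r}) :: (real\<times>real)\<times>real \<Rightarrow> real) \<in> borel_measurable borel"
    by (rule borel_measurable_indicator) (intro borel_closed closed_Times, auto)
  then have m2: "(\<lambda>z::(real\<times>real)\<times>real. indicator {0..r} (snd z) :: real) \<in> borel_measurable borel"
    by (simp only: eq)
  have m3: "(\<lambda>z::(real\<times>real)\<times>real. ennreal (indicator {0..r} (snd z) * G (fst z - snd z *\<^sub>R n))) \<in> borel_measurable borel"
    by (rule measurable_compose[OF borel_measurable_times[OF m2 m] measurable_ennreal])
  have lp: "lborel \<Otimes>\<^sub>M lborel = (lborel :: ((real\<times>real)\<times>real) measure)" by (rule lborel_prod)
  show ?thesis using m3 by (simp only: lp measurable_lborel2)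
qed


lemma nn_translate:
  fixes g :: "real \<times> real \<Rightarrow> ennreal"
  assumes "g \<in> borel_measurable borel"
  shows "(\<integral>\<^sup>+x. g (x - c) \<partial>lborel) = (\<integral>\<^sup>+x. g x \<partial>lborel)"
proof -
  have "(\<integral>\<^sup>+x. g x \<partial>lborel) = (\<integral>\<^sup>+x. g x \<partial>distr lborel borel ((+) (- c)))"
    by (simp add: lborel_distr_plus)
  also have "\<dots> = (\<integral>\<^sup>+x. g (- c + x) \<partial>lborel)"
    using assms by (subst nn_integral_distr) auto
  finally show ?thesis by simp
qed

lemma line_int:
  fixes G :: "real \<times> real \<Rightarrow> real"
  assumes cG: "continuous_on UNIV G" and r: "r \<ge> 0"
  shows "(\<integral>\<^sup>+x. (\<integral>\<^sup>+s. ennreal (indicator {0..r} s * G (x - s *\<^sub>R n)) \<partial>lborel) \<partial>lborel)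
         = ennreal r * (\<integral>\<^sup>+x. ennreal (G x) \<partial>lborel)"
proof -
  have mG: "G \<in> borel_measurable borel" using cG by (rule borel_measurable_continuous_onI)
  have m: "(\<lambda>(x, s). ennreal (indicator {0..r} s * G (x - s *\<^sub>R n))) \<in> borel_measurable (lborel \<Otimes>\<^sub>M lborel)"
    using meas_test[OF cG, of r n] by (simp add: case_prod_unfold)
  have "(\<integral>\<^sup>+x. (\<integral>\<^sup>+s. ennreal (indicator {0..r} s * G (x - s *\<^sub>R n)) \<partial>lborel) \<partial>lborel)
      = (\<integral>\<^sup>+s. (\<integral>\<^sup>+x. ennreal (indicator {0..r} s * G (x - s *\<^sub>R n)) \<partial>lborel) \<partial>lborel)"
    using lborel_pair.Fubini'[OF m] by simp
  also have "\<dots> = (\<integral>\<^sup>+s. ennreal (indicator {0..r} s) * (\<integral>\<^sup>+x. ennreal (G x) \<partial>lborel) \<partial>lborel)"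
  proof (rule nn_integral_cong)
    fix s :: real
    have "(\<integral>\<^sup>+x. ennreal (indicator {0..r} s * G (x - s *\<^sub>R n)) \<partial>lborel)
        = (\<integral>\<^sup>+x. ennreal (indicator {0..r} s) * ennreal (G (x - s *\<^sub>R n)) \<partial>lborel)"
      by (intro nn_integral_cong) (auto simp: indicator_def)
    also have "\<dots> = ennreal (indicator {0..r} s) * (\<integral>\<^sup>+x. ennreal (G (x - s *\<^sub>R n)) \<partial>lborel)"
      using mG by (subst nn_integral_cmult) auto
    also have "(\<integral>\<^sup>+x. ennreal (G (x - s *\<^sub>R n)) \<partial>lborel) = (\<integral>\<^sup>+x. ennreal (G x) \<partial>lborel)"
      using mG by (intro nn_translate[where g="\<lambda>x. ennreal (G x)"]) auto
    finally show "(\<integral>\<^sup>+x. ennreal (indicator {0..r} s * G (x - s *\<^sub>R n)) \<partial>lborel)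
        = ennreal (indicator {0..r} s) * (\<integral>\<^sup>+x. ennreal (G x) \<partial>lborel)" .
  qed
  also have "\<dots> = (\<integral>\<^sup>+x. ennreal (G x) \<partial>lborel) * emeasure lborel {0..r}"
    by (subst mult.commute) (simp add: ennreal_indicator nn_integral_cmult_indicator)
  also have "\<dots> = ennreal r * (\<integral>\<^sup>+x. ennreal (G x) \<partial>lborel)"
    using r by (simp add: mult.commute)
  finally show ?thesis .
qed


lemma nz_in_sector:
  assumes "\<phi> \<in> Cc1 \<Omega>" "\<phi> y \<noteq> 0" shows "y \<in> \<Omega>"
proof -
  have "y \<in> {x. \<phi> x \<noteq> 0}" using assms(2) by simp
  then have "y \<in> closure {x. \<phi> x \<noteq> 0}" using closure_subset by (metis subsetD)
  then show ?thesis using Cc1_D(4)[OF assms(1)] by (metis subsetD)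
qed

lemma pointwise_dir:
  fixes \<phi> :: "real \<times> real \<Rightarrow> real"
  assumes phi: "\<phi> \<in> Cc1 \<Omega>" and p: "p \<ge> 1" and n: "norm n = 1" and r: "r > 0"
    and out: "\<phi> (x - r *\<^sub>R n) = 0"
  shows "\<bar>\<phi> x\<bar> powr p \<le> r powr (p - 1) * integral {0..r} (\<lambda>s. norm (grad \<phi> (x - s *\<^sub>R n)) powr p)"
proof -
  have cl: "continuous_on {0..r} (\<lambda>s. norm (grad \<phi> (x - s *\<^sub>R n)))"
    by (rule continuous_on_norm, rule continuous_on_compose2[OF Cc1_D(2)[OF phi]])
       (auto intro!: continuous_intros)
  have "\<bar>\<phi> x\<bar> \<le> integral {0..r} (\<lambda>s. norm (grad \<phi> (x - s *\<^sub>R n)))"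
    using ftc_line[OF Cc1_D(1)[OF phi] Cc1_D(2)[OF phi] n r, of x] out by simp
  then have "\<bar>\<phi> x\<bar> powr p \<le> (integral {0..r} (\<lambda>s. norm (grad \<phi> (x - s *\<^sub>R n)))) powr p"
    using p by (intro powr_mono2) auto
  also have "\<dots> \<le> r powr (p - 1) * integral {0..r} (\<lambda>s. norm (grad \<phi> (x - s *\<^sub>R n)) powr p)"
    by (rule holder1[OF cl _ r p]) simp
  finally show ?thesis .
qed

lemma T_nonneg:
  fixes \<phi> :: "real \<times> real \<Rightarrow> real"
  assumes phi: "\<phi> \<in> Cc1 \<Omega>" and p: "p \<ge> 1" and r: "r > 0"
  shows "0 \<le> r powr (p - 1) * integral {0..r} (\<lambda>s. norm (grad \<phi> (x - s *\<^sub>R n)) powr p)"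
proof -
  have c: "continuous_on {0..r} (\<lambda>s. norm (grad \<phi> (x - s *\<^sub>R n)) powr p)"
    by (rule continuous_on_compose2[OF Cc1_int(3)[OF phi]]) (use p in \<open>auto intro!: continuous_intros\<close>)
  have "0 \<le> integral {0..r} (\<lambda>s. norm (grad \<phi> (x - s *\<^sub>R n)) powr p)"
    by (rule integral_nonneg[OF integrable_continuous_interval[OF c]]) simp
  then show ?thesis by simp
qed

lemma T_ennreal:
  fixes \<phi> :: "real \<times> real \<Rightarrow> real"
  assumes phi: "\<phi> \<in> Cc1 \<Omega>" and p: "p \<ge> 1" and r: "r > 0"
  shows "ennreal (integral {0..r} (\<lambda>s. norm (grad \<phi> (x - s *\<^sub>R n)) powr p))
     = (\<integral>\<^sup>+s. ennreal (indicator {0..r} s * norm (grad \<phi> (x - s *\<^sub>R n)) powr p) \<partial>lborel)"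
proof -
  have c: "continuous_on {0..r} (\<lambda>s. norm (grad \<phi> (x - s *\<^sub>R n)) powr p)"
    by (rule continuous_on_compose2[OF Cc1_int(3)[OF phi]]) (use p in \<open>auto intro!: continuous_intros\<close>)
  have hi: "((\<lambda>s. norm (grad \<phi> (x - s *\<^sub>R n)) powr p) has_integral
      integral {0..r} (\<lambda>s. norm (grad \<phi> (x - s *\<^sub>R n)) powr p)) {0..r}"
    using integrable_continuous_interval[OF c] by (rule integrable_integral)
  show ?thesis using nn_integral_has_integral_lebesgue[OF _ hi] by simp
qed


lemma three_ennreal: "(x::ennreal) + x + x = 3 * x"
proof -
  have "(3::ennreal) * x = (1 + 1 + 1) * x" by simp
  also have "\<dots> = x + x + x" by (simp only: distrib_right mult_1)
  finally show ?thesis by simp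
qed

lemma poinc_cc1:
  fixes \<phi> :: "real \<times> real \<Rightarrow> real"
  assumes k: "k \<ge> 1" and p: "p \<ge> 1" and phi: "\<phi> \<in> Cc1 (sector k)"
  shows "(\<integral>x. \<bar>\<phi> x\<bar> powr p \<partial>lborel) \<le> 3 * rr k powr p * (\<integral>x. norm (grad \<phi> x) powr p \<partial>lborel)"
proof -
  define r where "r = rr k"
  have r: "r > 0" unfolding r_def using rr_pos[OF k] .
  define G where "G = (\<lambda>y. norm (grad \<phi> y) powr p)"
  have p0: "p > 0" using p by simp
  have cG: "continuous_on UNIV G" unfolding G_def using Cc1_int(3)[OF phi p0] .
  have iG: "integrable lborel G" unfolding G_def using Cc1_int(2)[OF phi p0] .
  have iF: "integrable lborel (\<lambda>x. \<bar>\<phi> x\<bar> powr p)" using Cc1_int(1)[OF phi p0] .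
  define T where "T = (\<lambda>i x. r powr (p - 1) * integral {0..r} (\<lambda>s. G (x - s *\<^sub>R dir k i)))"
  define J where "J = (\<lambda>i x. \<integral>\<^sup>+s. ennreal (indicator {0..r} s * G (x - s *\<^sub>R dir k i)) \<partial>lborel)"
  have Tnn: "T i x \<ge> 0" for i x unfolding T_def G_def using T_nonneg[OF phi p r] .
  have TJ: "ennreal (T i x) = ennreal (r powr (p - 1)) * J i x" for i x
  proof -
    have "ennreal (T i x) = ennreal (r powr (p - 1)) * ennreal (integral {0..r} (\<lambda>s. G (x - s *\<^sub>R dir k i)))"
    proof -
      have "0 \<le> r powr (p - 1) * integral {0..r} (\<lambda>s. G (x - s *\<^sub>R dir k i))"
        using T_nonneg[OF phi p r, of x "dir k i"] by (simp add: G_def)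
      then have "0 \<le> integral {0..r} (\<lambda>s. G (x - s *\<^sub>R dir k i))"
        using r by (simp add: zero_le_mult_iff)
      then show ?thesis unfolding T_def by (subst ennreal_mult) auto
    qed
    also have "ennreal (integral {0..r} (\<lambda>s. G (x - s *\<^sub>R dir k i))) = J i x"
      unfolding J_def G_def by (rule T_ennreal[OF phi p r])
    finally show ?thesis .
  qed
  have pw: "\<bar>\<phi> x\<bar> powr p \<le> T 0 x + T 1 x + T 2 x" for x
  proof (cases "\<phi> x = 0")
    case True
    then show ?thesis using Tnn[of 0 x] Tnn[of 1 x] Tnn[of 2 x] p by simp
  next
    case False
    then have "x \<in> sector k" by (rule nz_in_sector[OF phi])
    from geo[OF k this] obtain i where i: "i < 3" "x - rr k *\<^sub>R dir k i \<notin> sector k" by blast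
    then have "\<phi> (x - r *\<^sub>R dir k i) = 0" using nz_in_sector[OF phi] unfolding r_def by metis
    then have "\<bar>\<phi> x\<bar> powr p \<le> T i x" unfolding T_def G_def
      using pointwise_dir[OF phi p dir_norm r] by blast
    moreover have "i = 0 \<or> i = 1 \<or> i = 2" using i(1) by linarith
    ultimately show ?thesis using Tnn[of 0 x] Tnn[of 1 x] Tnn[of 2 x] by fastforce
  qed
  have mJ: "J i \<in> borel_measurable lborel" for i
  proof -
    have "(\<lambda>(x, s). ennreal (indicator {0..r} s * G (x - s *\<^sub>R dir k i))) \<in> borel_measurable (lborel \<Otimes>\<^sub>M lborel)"
      using meas_test[OF cG, of r "dir k i"] by (simp add: case_prod_unfold)
    then show ?thesis unfolding J_def by (rule lborel.borel_measurable_nn_integral)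
  qed
  have intJ: "(\<integral>\<^sup>+x. J i x \<partial>lborel) = ennreal r * ennreal (\<integral>x. G x \<partial>lborel)" for i
  proof -
    have "(\<integral>\<^sup>+x. J i x \<partial>lborel) = ennreal r * (\<integral>\<^sup>+x. ennreal (G x) \<partial>lborel)"
      unfolding J_def using line_int[OF cG] r by simp
    also have "(\<integral>\<^sup>+x. ennreal (G x) \<partial>lborel) = ennreal (\<integral>x. G x \<partial>lborel)"
      using iG by (intro nn_integral_eq_integral) (auto simp: G_def)
    finally show ?thesis .
  qed
  define c where "c = ennreal (r powr (p - 1))"
  have "ennreal (\<integral>x. \<bar>\<phi> x\<bar> powr p \<partial>lborel) = (\<integral>\<^sup>+x. ennreal (\<bar>\<phi> x\<bar> powr p) \<partial>lborel)"
    using iF by (intro nn_integral_eq_integral[symmetric]) auto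
  also have "\<dots> \<le> (\<integral>\<^sup>+x. c * J 0 x + c * J 1 x + c * J 2 x \<partial>lborel)"
  proof (rule nn_integral_mono)
    fix x
    have "ennreal (\<bar>\<phi> x\<bar> powr p) \<le> ennreal (T 0 x + T 1 x + T 2 x)"
      using pw by (rule ennreal_leI)
    also have "\<dots> = ennreal (T 0 x) + ennreal (T 1 x) + ennreal (T 2 x)"
      using Tnn by (simp add: ennreal_plus)
    finally show "ennreal (\<bar>\<phi> x\<bar> powr p) \<le> c * J 0 x + c * J 1 x + c * J 2 x"
      unfolding TJ c_def .
  qed
  also have "\<dots> = c * (\<integral>\<^sup>+x. J 0 x \<partial>lborel) + c * (\<integral>\<^sup>+x. J 1 x \<partial>lborel) + c * (\<integral>\<^sup>+x. J 2 x \<partial>lborel)"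
    using mJ by (simp add: nn_integral_add nn_integral_cmult)
  also have "\<dots> = ennreal (3 * (r powr (p - 1) * r * (\<integral>x. G x \<partial>lborel)))"
  proof -
    have Gnn: "(\<integral>x. G x \<partial>lborel) \<ge> 0" unfolding G_def by (intro integral_nonneg_AE) auto
    have "c * (ennreal r * ennreal (\<integral>x. G x \<partial>lborel)) = ennreal (r powr (p - 1) * r * (\<integral>x. G x \<partial>lborel))"
      unfolding c_def using r Gnn by (simp add: ennreal_mult mult.assoc)
    then have e: "c * (ennreal r * ennreal (\<integral>x. G x \<partial>lborel)) = ennreal (r powr (p - 1) * r * (\<integral>x. G x \<partial>lborel))" .
    have X: "0 \<le> r powr (p - 1) * r * (\<integral>x. G x \<partial>lborel)" using r Gnn by simp
    show ?thesis unfolding intJ e three_ennreal using X by (simp add: ennreal_mult)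
  qed
  finally have "(\<integral>x. \<bar>\<phi> x\<bar> powr p \<partial>lborel) \<le> 3 * (r powr (p - 1) * r * (\<integral>x. G x \<partial>lborel))"
    using r by (subst (asm) ennreal_le_iff) (auto intro!: mult_nonneg_nonneg integral_nonneg_AE simp: G_def)
  also have "r powr (p - 1) * r = r powr p" using r by (simp add: powr_diff)
  finally show ?thesis unfolding r_def G_def by (simp add: mult.assoc)
qed


lemma int_split:
  fixes F E A :: "real \<times> real \<Rightarrow> real"
  assumes iF: "integrable lborel F" and iA: "integrable lborel A" and iE: "integrable lborel E"
    and pw: "\<And>x. F x \<le> a * A x + b * E x"
  shows "(\<integral>x. F x \<partial>lborel) \<le> a * (\<integral>x. A x \<partial>lborel) + b * (\<integral>x. E x \<partial>lborel)"
proof -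
  have "(\<integral>x. F x \<partial>lborel) \<le> (\<integral>x. a * A x + b * E x \<partial>lborel)"
    using iF iA iE pw by (intro integral_mono) auto
  also have "\<dots> = a * (\<integral>x. A x \<partial>lborel) + b * (\<integral>x. E x \<partial>lborel)"
    using iA iE by simp
  finally show ?thesis .
qed

lemma poinc_W:
  assumes k: "k \<ge> 1" and p: "p \<ge> 1" and W: "W01p (sector k) p u g"
  shows "(\<integral>x. \<bar>u x\<bar> powr p \<partial>lborel) \<le> 3 * rr k powr p * (\<integral>x. norm (g x) powr p \<partial>lborel)"
proof -
  have p0: "p > 0" using p by simp
  obtain \<phi> where phi: "\<And>n. \<phi> n \<in> Cc1 (sector k)"
    and ie: "\<And>n. integrable lborel (\<lambda>x. \<bar>\<phi> n x - u x\<bar> powr p)"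
    and if': "\<And>n. integrable lborel (\<lambda>x. norm (grad (\<phi> n) x - g x) powr p)"
    and le: "(\<lambda>n. \<integral>x. \<bar>\<phi> n x - u x\<bar> powr p \<partial>lborel) \<longlonglongrightarrow> 0"
    and lf: "(\<lambda>n. \<integral>x. norm (grad (\<phi> n) x - g x) powr p \<partial>lborel) \<longlonglongrightarrow> 0"
    and iu: "integrable lborel (\<lambda>x. \<bar>u x\<bar> powr p)"
    and ig: "integrable lborel (\<lambda>x. norm (g x) powr p)"
    using W unfolding W01p_def by blast
  define U where "U = (\<integral>x. \<bar>u x\<bar> powr p \<partial>lborel)"
  define G where "G = (\<integral>x. norm (g x) powr p \<partial>lborel)"
  define C where "C = 3 * rr k powr p"
  define e where "e = (\<lambda>n. \<integral>x. \<bar>\<phi> n x - u x\<bar> powr p \<partial>lborel)"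
  define f where "f = (\<lambda>n. \<integral>x. norm (grad (\<phi> n) x - g x) powr p \<partial>lborel)"
  have C0: "C \<ge> 0" unfolding C_def by simp
  have bound: "U \<le> t powr (1 - p) * (C * (t powr (1 - p) * G))" if t: "0 < t" "t < 1" for t
  proof -
    define A where "A = t powr (1 - p)"
    define B where "B = (1 - t) powr (1 - p)"
    have A0: "A \<ge> 0" unfolding A_def by simp
    have step: "U \<le> A * (C * (A * G + B * f n)) + B * e n" for n
    proof -
      have U1: "U \<le> A * (\<integral>x. \<bar>\<phi> n x\<bar> powr p \<partial>lborel) + B * e n"
        unfolding U_def e_def A_def B_def
      proof (rule int_split[OF iu Cc1_int(1)[OF phi p0] ie])
        fix x
        have "\<bar>u x\<bar> \<le> \<bar>\<phi> n x\<bar> + \<bar>\<phi> n x - u x\<bar>" by linarith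
        then have "\<bar>u x\<bar> powr p \<le> (\<bar>\<phi> n x\<bar> + \<bar>\<phi> n x - u x\<bar>) powr p" using p0 by (intro powr_mono2) auto
        also have "\<dots> \<le> t powr (1 - p) * \<bar>\<phi> n x\<bar> powr p + (1 - t) powr (1 - p) * \<bar>\<phi> n x - u x\<bar> powr p"
          using t p by (intro convex2) auto
        finally show "\<bar>u x\<bar> powr p \<le> t powr (1 - p) * \<bar>\<phi> n x\<bar> powr p + (1 - t) powr (1 - p) * \<bar>\<phi> n x - u x\<bar> powr p" .
      qed
      have U2: "(\<integral>x. \<bar>\<phi> n x\<bar> powr p \<partial>lborel) \<le> C * (\<integral>x. norm (grad (\<phi> n) x) powr p \<partial>lborel)"
        unfolding C_def using poinc_cc1[OF k p phi] by simp
      have U3: "(\<integral>x. norm (grad (\<phi> n) x) powr p \<partial>lborel) \<le> A * G + B * f n"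
        unfolding G_def f_def A_def B_def
      proof (rule int_split[OF Cc1_int(2)[OF phi p0] ig if'])
        fix x
        have "norm (grad (\<phi> n) x) \<le> norm (g x) + norm (grad (\<phi> n) x - g x)" by (rule norm_triangle_sub)
        then have "norm (grad (\<phi> n) x) powr p \<le> (norm (g x) + norm (grad (\<phi> n) x - g x)) powr p" using p0 by (intro powr_mono2) auto
        also have "\<dots> \<le> t powr (1 - p) * norm (g x) powr p + (1 - t) powr (1 - p) * norm (grad (\<phi> n) x - g x) powr p"
          using t p by (intro convex2) auto
        finally show "norm (grad (\<phi> n) x) powr p \<le> t powr (1 - p) * norm (g x) powr p + (1 - t) powr (1 - p) * norm (grad (\<phi> n) x - g x) powr p" .
      qed
      have "A * (\<integral>x. \<bar>\<phi> n x\<bar> powr p \<partial>lborel) \<le> A * (C * (A * G + B * f n))"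
        using U2 U3 A0 C0 by (intro mult_left_mono order_trans[OF U2] mult_left_mono) auto
      then show ?thesis using U1 by linarith
    qed
    have lim: "(\<lambda>n. A * (C * (A * G + B * f n)) + B * e n) \<longlonglongrightarrow> A * (C * (A * G + B * 0)) + B * 0"
      using le lf unfolding e_def f_def by (intro tendsto_intros)
    have "U \<le> A * (C * (A * G + B * 0)) + B * 0"
      by (rule LIMSEQ_le_const[OF lim]) (use step in auto)
    then show ?thesis unfolding A_def by simp
  qed
  have lim1: "((\<lambda>t. t powr (1 - p) * (C * (t powr (1 - p) * G))) \<longlongrightarrow> 1 powr (1 - p) * (C * (1 powr (1 - p) * G))) (at_left 1)"
    by (intro tendsto_intros) auto
  have "U \<le> 1 powr (1 - p) * (C * (1 powr (1 - p) * G))"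
  proof (rule tendsto_le[OF _ lim1 tendsto_const])
    show "at_left (1::real) \<noteq> bot" by simp
    show "\<forall>\<^sub>F t in at_left 1. U \<le> t powr (1 - p) * (C * (t powr (1 - p) * G))"
    proof -
      have "eventually (\<lambda>t. t \<in> {0<..<1}) (at_left (1::real))" by (rule eventually_at_left_real) simp
      then show ?thesis by (rule eventually_mono) (auto intro: bound)
    qed
  qed
  then show ?thesis unfolding U_def C_def G_def by simp
qed


lemma Cc1_scale:
  assumes phi: "\<phi> \<in> Cc1 \<Omega>" and a: "a \<noteq> 0"
  shows "(\<lambda>x. a * \<phi> x) \<in> Cc1 \<Omega>" "\<And>x. grad (\<lambda>x. a * \<phi> x) x = a *\<^sub>R grad \<phi> x"
proof -
  have D: "((\<lambda>x. a * \<phi> x) has_derivative (\<lambda>v. a * (grad \<phi> x \<bullet> v))) (at x)" for x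
    using grad_deriv[OF Cc1_D(1)[OF phi]] by (rule has_derivative_mult_right)
  show g: "grad (\<lambda>x. a * \<phi> x) x = a *\<^sub>R grad \<phi> x" for x
  proof -
    have "grad (\<lambda>x. a * \<phi> x) x = (a * fst (grad \<phi> x), a * snd (grad \<phi> x))"
      using grad_eq[OF D[of x]] by (simp add: inner_prod_def)
    also have "\<dots> = a *\<^sub>R grad \<phi> x" by (simp add: scaleR_prod_def)
    finally show ?thesis .
  qed
  have dif: "(\<lambda>x. a * \<phi> x) differentiable (at x)" for x using D differentiable_def by blast
  have cg: "continuous_on UNIV (grad (\<lambda>x. a * \<phi> x))"
  proof -
    have "continuous_on UNIV (\<lambda>x. a *\<^sub>R grad \<phi> x)"
      using Cc1_D(2)[OF phi] by (intro continuous_on_scaleR continuous_on_const)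
    moreover have "grad (\<lambda>x. a * \<phi> x) = (\<lambda>x. a *\<^sub>R grad \<phi> x)" using g by (simp add: fun_eq_iff)
    ultimately show ?thesis by simp
  qed
  have eq: "{x. a * \<phi> x \<noteq> 0} = {x. \<phi> x \<noteq> 0}" using a by simp
  show "(\<lambda>x. a * \<phi> x) \<in> Cc1 \<Omega>"
    unfolding Cc1_def mem_Collect_eq eq using dif cg Cc1_D(3,4)[OF phi] by blast
qed

lemma Cc1_W01p:
  assumes phi: "\<phi> \<in> Cc1 \<Omega>" and p: "p > 0"
  shows "W01p \<Omega> p \<phi> (grad \<phi>)"
proof -
  have m1: "\<phi> \<in> borel_measurable lborel" using Cc1_cont[OF phi] by (simp add: borel_measurable_continuous_onI)
  have m2: "grad \<phi> \<in> borel_measurable lborel" using Cc1_D(2)[OF phi] by (simp add: borel_measurable_continuous_onI)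
  have z: "\<And>x. \<bar>\<phi> x - \<phi> x\<bar> powr p = 0" "\<And>x. norm (grad \<phi> x - grad \<phi> x) powr p = 0" by simp_all
  show ?thesis unfolding W01p_def
    using m1 m2 Cc1_int(1,2)[OF phi p] phi
    by (intro conjI exI[of _ "\<lambda>n. \<phi>"]) (simp_all only: z, auto)
qed

definition Sset :: "(real \<times> real) set \<Rightarrow> real \<Rightarrow> real set" where
  "Sset \<Omega> p = {(\<integral>x. norm (g x) powr p \<partial>lborel) | u g. W01p \<Omega> p u g \<and> (\<integral>x. \<bar>u x\<bar> powr p \<partial>lborel) = 1}"

lemma lambda1_Sset: "lambda1 \<Omega> p = Inf (Sset \<Omega> p)" unfolding lambda1_def Sset_def ..

lemma Sset_bdd: "bdd_below (Sset \<Omega> p)"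
  unfolding Sset_def by (rule bdd_belowI[of _ 0]) (auto intro!: integral_nonneg_AE)

lemma upper_general:
  assumes phi: "\<phi> \<in> Cc1 \<Omega>" and p: "p \<ge> 1" and pos: "(\<integral>x. \<bar>\<phi> x\<bar> powr p \<partial>lborel) > 0"
  shows "Sset \<Omega> p \<noteq> {}" "lambda1 \<Omega> p \<le> (\<integral>x. norm (grad \<phi> x) powr p \<partial>lborel) / (\<integral>x. \<bar>\<phi> x\<bar> powr p \<partial>lborel)"
proof -
  define N where "N = (\<integral>x. \<bar>\<phi> x\<bar> powr p \<partial>lborel)"
  define a where "a = N powr (- 1 / p)"
  have p0: "p > 0" using p by simp
  have N: "N > 0" using pos N_def by simp
  have a: "a > 0" unfolding a_def using N by simp
  have e: "(-1/p)*p = -1" using p0 by simp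
  have ap: "a powr p = 1 / N" unfolding a_def powr_powr e using N by (simp add: powr_minus divide_inverse)
  define \<psi> where "\<psi> = (\<lambda>x. a * \<phi> x)"
  have psi: "\<psi> \<in> Cc1 \<Omega>" unfolding \<psi>_def using Cc1_scale(1)[OF phi] a by simp
  have gpsi: "grad \<psi> x = a *\<^sub>R grad \<phi> x" for x unfolding \<psi>_def using Cc1_scale(2)[OF phi] a by simp
  have W: "W01p \<Omega> p \<psi> (grad \<psi>)" using Cc1_W01p[OF psi p0] .
  have "(\<integral>x. \<bar>\<psi> x\<bar> powr p \<partial>lborel) = (\<integral>x. a powr p * \<bar>\<phi> x\<bar> powr p \<partial>lborel)"
    unfolding \<psi>_def using a by (simp add: abs_mult powr_mult)
  also have "\<dots> = 1" using ap N by (simp add: N_def)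
  finally have n1: "(\<integral>x. \<bar>\<psi> x\<bar> powr p \<partial>lborel) = 1" .
  have "(\<integral>x. norm (grad \<psi> x) powr p \<partial>lborel) = (\<integral>x. a powr p * norm (grad \<phi> x) powr p \<partial>lborel)"
    unfolding gpsi using a by (simp add: powr_mult)
  also have "\<dots> = (\<integral>x. norm (grad \<phi> x) powr p \<partial>lborel) / N" using ap by simp
  finally have n2: "(\<integral>x. norm (grad \<psi> x) powr p \<partial>lborel) = (\<integral>x. norm (grad \<phi> x) powr p \<partial>lborel) / N" .
  have mem: "(\<integral>x. norm (grad \<psi> x) powr p \<partial>lborel) \<in> Sset \<Omega> p"
    unfolding Sset_def using W n1 by blast
  then show "Sset \<Omega> p \<noteq> {}" by blast
  have "lambda1 \<Omega> p \<le> (\<integral>x. norm (grad \<psi> x) powr p \<partial>lborel)"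
    unfolding lambda1_Sset by (rule cInf_lower[OF mem Sset_bdd])
  then show "lambda1 \<Omega> p \<le> (\<integral>x. norm (grad \<phi> x) powr p \<partial>lborel) / (\<integral>x. \<bar>\<phi> x\<bar> powr p \<partial>lborel)"
    using n2 N_def by simp
qed

lemma lower_general:
  assumes k: "k \<ge> 1" and p: "p \<ge> 1" and ne: "Sset (sector k) p \<noteq> {}"
  shows "lambda1 (sector k) p \<ge> 1 / (3 * rr k powr p)"
  unfolding lambda1_Sset
proof (rule cInf_greatest[OF ne])
  fix z assume "z \<in> Sset (sector k) p"
  then obtain u g where W: "W01p (sector k) p u g" and u1: "(\<integral>x. \<bar>u x\<bar> powr p \<partial>lborel) = 1"
    and z: "z = (\<integral>x. norm (g x) powr p \<partial>lborel)" unfolding Sset_def by blast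
  have "1 \<le> 3 * rr k powr p * z" using poinc_W[OF k p W] u1 z by simp
  moreover have "rr k > 0" using rr_pos[OF k] .
  ultimately show "1 / (3 * rr k powr p) \<le> z" by (simp add: field_simps)
qed


lemma deriv_glue:
  fixes f1 f2 g :: "real \<Rightarrow> real"
  assumes d1: "(f1 has_real_derivative D) (at x0)" and d2: "(f2 has_real_derivative D) (at x0)"
    and e1: "\<And>y. y \<le> x0 \<Longrightarrow> g y = f1 y" and e2: "\<And>y. y \<ge> x0 \<Longrightarrow> g y = f2 y"
  shows "(g has_real_derivative D) (at x0)"
proof -
  have q1: "((\<lambda>y. (f1 y - f1 x0) / (y - x0)) \<longlongrightarrow> D) (at_left x0)"
    using d1 unfolding has_field_derivative_iff by (rule tendsto_mono[OF at_le, rotated]) simp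
  have q2: "((\<lambda>y. (f2 y - f2 x0) / (y - x0)) \<longlongrightarrow> D) (at_right x0)"
    using d2 unfolding has_field_derivative_iff by (rule tendsto_mono[OF at_le, rotated]) simp
  have l: "((\<lambda>y. (g y - g x0) / (y - x0)) \<longlongrightarrow> D) (at_left x0)"
  proof (rule tendsto_cong[THEN iffD1, OF _ q1])
    have "eventually (\<lambda>y. y \<in> {x0 - 1<..<x0}) (at_left x0)" by (rule eventually_at_left_real) simp
    then show "\<forall>\<^sub>F y in at_left x0. (f1 y - f1 x0) / (y - x0) = (g y - g x0) / (y - x0)"
      by (rule eventually_mono) (simp add: e1)
  qed
  have r: "((\<lambda>y. (g y - g x0) / (y - x0)) \<longlongrightarrow> D) (at_right x0)"
  proof (rule tendsto_cong[THEN iffD1, OF _ q2])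
    have "eventually (\<lambda>y. y \<in> {x0<..<x0 + 1}) (at_right x0)" by (rule eventually_at_right_real) simp
    then show "\<forall>\<^sub>F y in at_right x0. (f2 y - f2 x0) / (y - x0) = (g y - g x0) / (y - x0)"
      by (rule eventually_mono) (simp add: e2)
  qed
  have "((\<lambda>y. (g y - g x0) / (y - x0)) \<longlongrightarrow> D) (at x0)"
    using l r by (simp add: filterlim_at_split)
  then show ?thesis unfolding has_field_derivative_iff .
qed

definition gf :: "real \<Rightarrow> nat \<Rightarrow> real \<Rightarrow> real" where
  "gf R m \<sigma> = (if \<sigma> \<le> R then R - \<sigma> + R / (Suc m) * ((\<sigma> / R) ^ Suc m - 1) else 0)"
definition gd :: "real \<Rightarrow> nat \<Rightarrow> real \<Rightarrow> real" where
  "gd R m \<sigma> = (if \<sigma> \<le> R then (\<sigma> / R) ^ m - 1 else 0)"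

lemma gf_deriv:
  assumes R: "R > 0" and m: "m \<ge> 1"
  shows "(gf R m has_real_derivative gd R m \<sigma>) (at \<sigma>)"
proof -
  define f1 where "f1 = (\<lambda>\<sigma>. R - \<sigma> + R / (Suc m) * ((\<sigma> / R) ^ Suc m - 1))"
  have d1: "(f1 has_real_derivative ((\<sigma> / R) ^ m - 1)) (at \<sigma>)" for \<sigma>
  proof -
    define c where "c = R / real (Suc m) / R ^ Suc m"
    have f1e: "f1 = (\<lambda>\<sigma>. R - \<sigma> + c * \<sigma> ^ Suc m - R / Suc m)"
      unfolding f1_def c_def by (simp add: fun_eq_iff power_divide right_diff_distrib)
    have "((\<lambda>\<sigma>. R - \<sigma> + c * \<sigma> ^ Suc m - R / Suc m) has_real_derivative (0 - 1 + c * (real (Suc m) * \<sigma> ^ m) - 0)) (at \<sigma>)"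
    proof -
      have pw: "((\<lambda>z. z ^ Suc m) has_real_derivative real (Suc m) * \<sigma> ^ m) (at \<sigma>)"
        using DERIV_pow[of "Suc m" \<sigma>] by simp
      show ?thesis by (intro derivative_intros DERIV_cmult[OF pw])
    qed
    moreover have "0 - 1 + c * (real (Suc m) * \<sigma> ^ m) - 0 = (\<sigma> / R) ^ m - 1"
    proof -
      have h1: "R / real (Suc m) / R ^ Suc m * (real (Suc m) * \<sigma> ^ m) = R / R ^ Suc m * \<sigma> ^ m"
        by (simp del: of_nat_Suc)
      have h2: "R / R ^ Suc m = 1 / R ^ m" using R by simp
      have "c * (real (Suc m) * \<sigma> ^ m) = (\<sigma> / R) ^ m"
        unfolding c_def h1 h2 by (simp add: power_divide)
      then show ?thesis by linarith
    qed
    ultimately show ?thesis unfolding f1e by simp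
  qed
  have d2: "((\<lambda>_. 0::real) has_real_derivative 0) (at \<sigma>)" for \<sigma> by simp
  consider "\<sigma> < R" | "\<sigma> = R" | "\<sigma> > R" by linarith
  then show ?thesis
  proof cases
    case 1
    have "(gf R m has_real_derivative ((\<sigma> / R) ^ m - 1)) (at \<sigma>)"
    proof (rule has_field_derivative_transform_within_open[OF d1, of "{..<R}"])
      show "\<sigma> \<in> {..<R}" using 1 by simp
    qed (auto simp: gf_def f1_def)
    then show ?thesis using 1 by (simp add: gd_def)
  next
    case 3
    have "(gf R m has_real_derivative 0) (at \<sigma>)"
    proof (rule has_field_derivative_transform_within_open[OF d2, of "{R<..}"])
      show "\<sigma> \<in> {R<..}" using 3 by simp
    qed (auto simp: gf_def)
    then show ?thesis using 3 by (simp add: gd_def)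
  next
    case 2
    have "(gf R m has_real_derivative 0) (at R)"
    proof (rule deriv_glue[OF _ d2])
      show "(f1 has_real_derivative 0) (at R)" using d1[of R] R by simp
    qed (auto simp: gf_def f1_def)
    then show ?thesis using 2 R by (simp add: gd_def)
  qed
qed

lemma gd_cont: assumes R: "R > 0" shows "continuous_on UNIV (gd R m)"
proof -
  have "continuous_on UNIV (\<lambda>\<sigma>. if \<sigma> \<le> R then (\<sigma> / R) ^ m - 1 else 0)"
    using R by (intro continuous_on_cases_le) (auto intro!: continuous_intros)
  then show ?thesis unfolding gd_def[abs_def] .
qed

lemma gd_bound: assumes R: "R > 0" and s: "\<sigma> \<ge> 0" shows "\<bar>gd R m \<sigma>\<bar> \<le> 1"
proof (cases "\<sigma> \<le> R")
  case True
  have "(\<sigma> / R) ^ m \<le> 1" using True s R by (intro power_le_one) auto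
  moreover have "(\<sigma> / R) ^ m \<ge> 0" using s R by simp
  ultimately show ?thesis using True by (simp add: gd_def)
qed (simp add: gd_def)

lemma gf_lower: assumes R: "R > 0" and s: "0 \<le> \<sigma>" "\<sigma> \<le> R"
  shows "gf R m \<sigma> \<ge> R - \<sigma> - R / Suc m"
proof -
  have "(\<sigma> / R) ^ Suc m \<ge> 0" using s R by simp
  then have "R / Suc m * ((\<sigma> / R) ^ Suc m - 1) \<ge> R / Suc m * (0 - 1)"
    using R by (intro mult_left_mono) auto
  then show ?thesis using s by (simp add: gf_def)
qed


definition cen :: "real \<Rightarrow> real \<times> real" where
  "cen k = (cos (pi/(2*k)) / (1 + sb k), sin (pi/(2*k)) / (1 + sb k))"

lemma polar_repr:
  fixes y :: "real \<times> real"
  assumes y2: "snd y > 0"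
  obtains \<theta> where "y = (norm y * cos \<theta>, norm y * sin \<theta>)" "0 < \<theta>" "\<theta> < pi"
proof -
  obtain a b where ab: "y = (a, b)" by (cases y)
  have b: "b > 0" using y2 ab by simp
  define \<rho> where "\<rho> = norm y"
  have \<rho>: "\<rho> = sqrt (a\<^sup>2 + b\<^sup>2)" unfolding \<rho>_def ab by (simp add: norm_Pair)
  have \<rho>p: "\<rho> > 0" using b \<rho> by (simp add: add_nonneg_pos)
  have \<rho>2: "\<rho>\<^sup>2 = a\<^sup>2 + b\<^sup>2" using \<rho> by simp
  have ab_lt: "\<bar>a\<bar> < \<rho>"
  proof -
    have "a\<^sup>2 < \<rho>\<^sup>2" using \<rho>2 b by simp
    then show ?thesis using \<rho>p by (metis abs_of_pos power2_abs power_less_imp_less_base less_imp_le)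
  qed
  define t where "t = a / \<rho>"
  have t: "-1 < t" "t < 1" using ab_lt \<rho>p unfolding t_def by (auto simp: abs_less_iff field_simps)
  define \<theta> where "\<theta> = arccos t"
  have c: "cos \<theta> = t" unfolding \<theta>_def using t by simp
  have s: "sin \<theta> = sqrt (1 - t\<^sup>2)" unfolding \<theta>_def using t by (intro sin_arccos_abs) simp
  have S: "a\<^sup>2 + b\<^sup>2 > 0" using b by (simp add: add_nonneg_pos)
  have "1 - t\<^sup>2 = (\<rho>\<^sup>2 - a\<^sup>2) / \<rho>\<^sup>2" unfolding t_def using \<rho>p by (simp add: power_divide field_simps)
  also have "\<dots> = (b / \<rho>)\<^sup>2" using \<rho>2 by (simp add: power_divide)
  finally have "1 - t\<^sup>2 = (b / \<rho>)\<^sup>2" .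
  then have s': "sin \<theta> = b / \<rho>" using s b \<rho>p by simp
  have "0 < \<theta> \<and> \<theta> < pi" unfolding \<theta>_def using arccos_lt_bounded t by blast
  moreover have "y = (\<rho> * cos \<theta>, \<rho> * sin \<theta>)" using c s' \<rho>p ab unfolding t_def by simp
  ultimately show ?thesis using that unfolding \<rho>_def by blast
qed

lemma ball_in_sector:
  assumes k: "k \<ge> 1" and d: "dist y (cen k) < rr k"
  shows "y \<in> sector k"
proof -
  define b where "b = pi / (2*k)"
  define s where "s = sb k"
  have s: "s > 0" "s \<le> 1" unfolding s_def using sb_pos[OF k] by auto
  have sb: "sin b = s" unfolding s_def sb_def b_def ..
  define d0 where "d0 = 1 / (1 + s)"
  have cen: "cen k = (d0 * cos b, d0 * s)" unfolding cen_def d0_def b_def s_def sb_def by simp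
  have rr: "rr k = d0 * s" unfolding rr_def d0_def s_def by simp
  have pk: "pi / k = 2 * b" unfolding b_def by simp
  have kp: "pi / k \<le> pi" using k by (simp add: field_simps)
  define e where "e = y - cen k"
  have ne: "norm e < d0 * s" using d rr unfolding e_def by (simp add: dist_norm)
  obtain e1 e2 where ee: "e = (e1, e2)" by (cases e)
  have e1: "\<bar>e1\<bar> \<le> norm e" using ee norm_fst_le[of e1 e2] by simp
  have e2: "\<bar>e2\<bar> \<le> norm e" using ee norm_snd_le[of e2 e1] by simp
  have "y = cen k + e" unfolding e_def by simp
  then have y: "y = (d0 * cos b + e1, d0 * s + e2)" by (simp add: cen ee)
  have y2: "snd y > 0" using y e2 ne by simp
  have n2: "fst y * sin (2*b) - snd y * cos (2*b) > 0"
  proof -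
    have "fst y * sin (2*b) - snd y * cos (2*b) = d0 * (cos b * sin (2*b) - s * cos (2*b)) + (e1 * sin (2*b) - e2 * cos (2*b))"
      using y by (simp add: algebra_simps)
    also have "cos b * sin (2*b) - s * cos (2*b) = s"
    proof -
      have h: "sin (2*b) * cos b - cos (2*b) * sin b = sin b" using sin_diff[of "2*b" b] by simp
      then show ?thesis using sb by (simp add: mult.commute)
    qed
    also have "\<bar>e1 * sin (2*b) - e2 * cos (2*b)\<bar> \<le> norm e"
    proof -
      have "\<bar>e \<bullet> (sin (2*b), - cos (2*b))\<bar> \<le> norm e * norm (sin (2*b), - cos (2*b))"
        by (rule Cauchy_Schwarz_ineq2)
      moreover have "norm (sin (2*b), - cos (2*b)) = 1" by (simp add: norm_Pair)
      ultimately show ?thesis using ee by (simp add: inner_prod_def)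
    qed
    ultimately show ?thesis using ne by linarith
  qed
  have n1: "norm y < 1"
  proof -
    have "norm (cen k) = sqrt ((d0 * cos b)\<^sup>2 + (d0 * sin b)\<^sup>2)" unfolding cen sb[symmetric]
      by (simp add: norm_Pair)
    also have "(d0 * cos b)\<^sup>2 + (d0 * sin b)\<^sup>2 = d0\<^sup>2 * ((sin b)\<^sup>2 + (cos b)\<^sup>2)"
      by (simp only: power_mult_distrib distrib_left add.commute)
    also have "\<dots> = d0\<^sup>2" by (simp only: sin_cos_squared_add mult_1_right)
    also have "sqrt (d0\<^sup>2) = d0" using s by (simp add: d0_def)
    finally have "norm (cen k) = d0" .
    then have "norm y \<le> d0 + norm e" unfolding e_def using norm_triangle_ineq[of "cen k" "y - cen k"] by simp
    also have "\<dots> < d0 + d0 * s" using ne by simp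
    also have "\<dots> = 1" unfolding d0_def using s by (simp add: field_simps)
    finally show ?thesis .
  qed
  obtain \<theta> where th: "y = (norm y * cos \<theta>, norm y * sin \<theta>)" "0 < \<theta>" "\<theta> < pi"
    using polar_repr[OF y2] by blast
  have "\<theta> < pi / k"
  proof (rule ccontr)
    assume "\<not> \<theta> < pi / k"
    have b0: "b > 0" unfolding b_def using k by simp
    have h1: "0 \<le> \<theta> - 2*b" using pk \<open>\<not> \<theta> < pi / k\<close> by linarith
    have h2: "\<theta> - 2*b \<le> pi" using th(3) b0 by linarith
    have "sin (\<theta> - 2*b) \<ge> 0" using h1 h2 by (rule sin_ge_zero)
    moreover
    define \<rho> where "\<rho> = norm y"
    have fy: "fst y = \<rho> * cos \<theta>" "snd y = \<rho> * sin \<theta>" unfolding \<rho>_def using th(1) by (metis fst_conv, metis snd_conv)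
    have "fst y * sin (2*b) - snd y * cos (2*b) = - norm y * sin (\<theta> - 2*b)"
      unfolding fy \<rho>_def[symmetric] sin_diff by (simp add: algebra_simps)
    ultimately show False using n2 mult_nonneg_nonneg[OF norm_ge_zero[of y], of "sin (\<theta> - 2*b)"] by linarith
  qed
  moreover have "norm y > 0"
  proof -
    have "y \<noteq> 0" proof assume "y = 0" then show False using y2 by simp qed
    then show ?thesis by simp
  qed
  ultimately show ?thesis unfolding sector_def using th n1 by blast
qed


definition wfn :: "real \<times> real \<Rightarrow> real \<Rightarrow> real \<times> real \<Rightarrow> real" where
  "wfn c \<delta> x = sqrt ((x - c) \<bullet> (x - c) + \<delta>\<^sup>2)"

lemma wfn_pos: "\<delta> > 0 \<Longrightarrow> wfn c \<delta> x > 0"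
  unfolding wfn_def by (simp add: add_nonneg_pos)

lemma wfn_ge: "norm (x - c) \<le> wfn c \<delta> x"
proof -
  have "norm (x - c) = sqrt ((x - c) \<bullet> (x - c))" by (simp add: norm_eq_sqrt_inner)
  also have "\<dots> \<le> wfn c \<delta> x" unfolding wfn_def by simp
  finally show ?thesis .
qed

lemma wfn_le: assumes "\<delta> > 0" shows "wfn c \<delta> x \<le> norm (x - c) + \<delta>"
proof -
  have "(x - c) \<bullet> (x - c) + \<delta>\<^sup>2 \<le> (norm (x - c) + \<delta>)\<^sup>2"
    using assms by (simp add: power2_norm_eq_inner[symmetric] power2_sum)
  then have "wfn c \<delta> x \<le> sqrt ((norm (x - c) + \<delta>)\<^sup>2)" unfolding wfn_def by (rule real_sqrt_le_mono)
  also have "\<dots> = norm (x - c) + \<delta>" using assms by simp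
  finally show ?thesis .
qed

lemma wfn_deriv:
  assumes d: "\<delta> > 0"
  shows "(wfn c \<delta> has_derivative (\<lambda>v. ((x - c) \<bullet> v) / wfn c \<delta> x)) (at x)"
proof -
  define h where "h = (\<lambda>x. (x - c) \<bullet> (x - c) + \<delta>\<^sup>2)"
  have hp: "h x > 0" unfolding h_def using d by (simp add: add_nonneg_pos)
  have dh: "(h has_derivative (\<lambda>v. 2 * ((x - c) \<bullet> v))) (at x)"
    unfolding h_def by (auto intro!: derivative_eq_intros simp: inner_commute)
  have ds: "(sqrt has_real_derivative inverse (sqrt (h x)) / 2) (at (h x))"
    using hp by (rule DERIV_real_sqrt)
  have "((\<lambda>x. sqrt (h x)) has_derivative (\<lambda>v. inverse (sqrt (h x)) / 2 * (2 * ((x - c) \<bullet> v)))) (at x)"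
    using has_derivative_compose[OF dh ds[unfolded has_field_derivative_def]] by simp
  moreover have "(\<lambda>v. inverse (sqrt (h x)) / 2 * (2 * ((x - c) \<bullet> v))) = (\<lambda>v. ((x - c) \<bullet> v) / wfn c \<delta> x)"
    unfolding wfn_def h_def by (simp add: fun_eq_iff field_simps)
  moreover have "(\<lambda>x. sqrt (h x)) = wfn c \<delta>" unfolding wfn_def[abs_def] h_def ..
  ultimately show ?thesis by simp
qed

lemma wfn_cont: "continuous_on UNIV (wfn c \<delta>)"
  unfolding wfn_def[abs_def] by (intro continuous_intros)

definition tf :: "real \<Rightarrow> real \<Rightarrow> nat \<Rightarrow> real \<Rightarrow> real \<times> real \<Rightarrow> real" where
  "tf k R m \<delta> x = gf R m (wfn (cen k) \<delta> x)"

lemma tf_deriv: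
  assumes R: "R > 0" and m: "m \<ge> 1" and d: "\<delta> > 0"
  shows "(tf k R m \<delta> has_derivative (\<lambda>v. gd R m (wfn (cen k) \<delta> x) * (((x - cen k) \<bullet> v) / wfn (cen k) \<delta> x))) (at x)"
proof -
  have dg: "(gf R m has_derivative (\<lambda>t. gd R m (wfn (cen k) \<delta> x) * t)) (at (wfn (cen k) \<delta> x))"
    using gf_deriv[OF R m] unfolding has_field_derivative_def by blast
  have "((\<lambda>x. gf R m (wfn (cen k) \<delta> x)) has_derivative (\<lambda>v. gd R m (wfn (cen k) \<delta> x) * (((x - cen k) \<bullet> v) / wfn (cen k) \<delta> x))) (at x)"
    by (rule has_derivative_compose[OF wfn_deriv[OF d] dg])
  then show ?thesis unfolding tf_def[abs_def] .
qed

lemma tf_grad: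
  assumes R: "R > 0" and m: "m \<ge> 1" and d: "\<delta> > 0"
  shows "grad (tf k R m \<delta>) x = (gd R m (wfn (cen k) \<delta> x) / wfn (cen k) \<delta> x) *\<^sub>R (x - cen k)"
proof -
  have "grad (tf k R m \<delta>) x = (gd R m (wfn (cen k) \<delta> x) * (fst (x - cen k) / wfn (cen k) \<delta> x),
                               gd R m (wfn (cen k) \<delta> x) * (snd (x - cen k) / wfn (cen k) \<delta> x))"
    using grad_eq[OF tf_deriv[OF R m d]] by (simp add: inner_prod_def)
  also have "\<dots> = (gd R m (wfn (cen k) \<delta> x) / wfn (cen k) \<delta> x) *\<^sub>R (x - cen k)"
    by (simp add: scaleR_prod_def)
  finally show ?thesis .
qed

lemma tf_grad_norm:
  assumes R: "R > 0" and m: "m \<ge> 1" and d: "\<delta> > 0"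
  shows "norm (grad (tf k R m \<delta>) x) \<le> 1"
    "norm (x - cen k) > R \<Longrightarrow> grad (tf k R m \<delta>) x = 0"
proof -
  define w where "w = wfn (cen k) \<delta> x"
  have w: "w > 0" unfolding w_def using wfn_pos[OF d] .
  have wg: "norm (x - cen k) \<le> w" unfolding w_def by (rule wfn_ge)
  have gb: "\<bar>gd R m w\<bar> \<le> 1" using gd_bound[OF R] w by simp
  have "norm (grad (tf k R m \<delta>) x) = \<bar>gd R m w\<bar> / w * norm (x - cen k)"
    unfolding tf_grad[OF R m d] w_def[symmetric] using w by simp
  also have "\<dots> = \<bar>gd R m w\<bar> * (norm (x - cen k) / w)" by simp
  also have "\<dots> \<le> 1 * 1"
    using gb wg w by (intro mult_mono) auto
  finally show "norm (grad (tf k R m \<delta>) x) \<le> 1" by simp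
  assume "norm (x - cen k) > R"
  then have "w > R" using wg by simp
  then have "gd R m w = 0" by (simp add: gd_def)
  then show "grad (tf k R m \<delta>) x = 0" unfolding tf_grad[OF R m d] w_def[symmetric] by simp
qed

lemma tf_zero: "norm (x - cen k) > R \<Longrightarrow> tf k R m \<delta> x = 0"
proof -
  assume "norm (x - cen k) > R"
  then have "wfn (cen k) \<delta> x > R" using wfn_ge[of x "cen k" \<delta>] by simp
  then show ?thesis unfolding tf_def by (simp add: gf_def)
qed

lemma tf_Cc1:
  assumes k: "k \<ge> 1" and R: "R > 0" "R < rr k" and m: "m \<ge> 1" and d: "\<delta> > 0"
  shows "tf k R m \<delta> \<in> Cc1 (sector k)"
proof -
  have dif: "tf k R m \<delta> differentiable (at x)" for x
    using tf_deriv[OF R(1) m d] differentiable_def by blast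
  have c1: "continuous_on UNIV (\<lambda>x. gd R m (wfn (cen k) \<delta> x))"
    by (rule continuous_on_compose2[OF gd_cont[OF R(1)] wfn_cont]) auto
  have c2: "continuous_on UNIV (\<lambda>x. gd R m (wfn (cen k) \<delta> x) / wfn (cen k) \<delta> x)"
    using c1 wfn_cont by (rule continuous_on_divide) (use wfn_pos[OF d] in \<open>metis less_irrefl\<close>)
  have "continuous_on UNIV (\<lambda>x. (gd R m (wfn (cen k) \<delta> x) / wfn (cen k) \<delta> x) *\<^sub>R (x - cen k))"
    by (rule continuous_on_scaleR[OF c2 continuous_on_diff[OF continuous_on_id continuous_on_const]])
  moreover have "grad (tf k R m \<delta>) = (\<lambda>x. (gd R m (wfn (cen k) \<delta> x) / wfn (cen k) \<delta> x) *\<^sub>R (x - cen k))"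
    using tf_grad[OF R(1) m d] by (simp add: fun_eq_iff)
  ultimately have cg: "continuous_on UNIV (grad (tf k R m \<delta>))" by simp
  have sub: "{x. tf k R m \<delta> x \<noteq> 0} \<subseteq> cball (cen k) R"
  proof
    fix x assume "x \<in> {x. tf k R m \<delta> x \<noteq> 0}"
    then have "\<not> norm (x - cen k) > R" using tf_zero[of R x k m \<delta>] by auto
    then show "x \<in> cball (cen k) R" by (simp add: dist_norm norm_minus_commute)
  qed
  have cl: "closure {x. tf k R m \<delta> x \<noteq> 0} \<subseteq> cball (cen k) R"
    using sub by (rule closure_minimal) simp
  have cp: "compact (closure {x. tf k R m \<delta> x \<noteq> 0})"
    using sub by (intro compact_closure[THEN iffD2] bounded_subset[OF bounded_cball])
  have "cball (cen k) R \<subseteq> sector k"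
  proof
    fix y assume "y \<in> cball (cen k) R"
    then have "dist y (cen k) < rr k" using R by (simp add: dist_commute)
    then show "y \<in> sector k" by (rule ball_in_sector[OF k])
  qed
  then show ?thesis unfolding Cc1_def using dif cg cl cp by blast
qed


lemma tf_bounds:
  assumes k: "k \<ge> 1" and R: "R > 0" "R < rr k" and m: "m \<ge> 1" and d: "\<delta> > 0" and p: "p \<ge> 1"
    and mm: "R - 2 * \<delta> - R / Suc m > 0"
  shows "(\<integral>x. norm (grad (tf k R m \<delta>) x) powr p \<partial>lborel) \<le> measure lborel (cball (cen k) R)"
    "(\<integral>x. \<bar>tf k R m \<delta> x\<bar> powr p \<partial>lborel) \<ge> (R - 2 * \<delta> - R / Suc m) powr p * measure lborel (ball (cen k) \<delta>)"
proof -
  have p0: "p > 0" using p by simp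
  have phi: "tf k R m \<delta> \<in> Cc1 (sector k)" by (rule tf_Cc1[OF k R m d])
  have ic: "integrable lborel (indicat_real (cball (cen k) R))"
    using emeasure_lborel_cball_finite[of "cen k" R] by (intro integrable_real_indicator) auto
  have ib: "integrable lborel (indicat_real (ball (cen k) \<delta>))"
    using emeasure_lborel_ball_finite[of "cen k" \<delta>] by (intro integrable_real_indicator) auto
  have "(\<integral>x. norm (grad (tf k R m \<delta>) x) powr p \<partial>lborel) \<le> (\<integral>x. indicat_real (cball (cen k) R) x \<partial>lborel)"
  proof (rule integral_mono[OF Cc1_int(2)[OF phi p0] ic])
    fix x
    show "norm (grad (tf k R m \<delta>) x) powr p \<le> indicat_real (cball (cen k) R) x"
    proof (cases "x \<in> cball (cen k) R")
      case True
      have "norm (grad (tf k R m \<delta>) x) powr p \<le> 1"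
        using tf_grad_norm(1)[OF R(1) m d] p0 by (intro powr_le1) auto
      then show ?thesis using True by simp
    next
      case False
      then have "norm (x - cen k) > R" by (simp add: dist_norm norm_minus_commute)
      then show ?thesis using tf_grad_norm(2)[OF R(1) m d] False by simp
    qed
  qed
  then show "(\<integral>x. norm (grad (tf k R m \<delta>) x) powr p \<partial>lborel) \<le> measure lborel (cball (cen k) R)" by simp
  define mm where "mm = R - 2 * \<delta> - R / Suc m"
  have mm0: "mm > 0" using mm mm_def by simp
  have "(\<integral>x. mm powr p * indicat_real (ball (cen k) \<delta>) x \<partial>lborel) \<le> (\<integral>x. \<bar>tf k R m \<delta> x\<bar> powr p \<partial>lborel)"
  proof (rule integral_mono[OF _ Cc1_int(1)[OF phi p0]])
    show "integrable lborel (\<lambda>x. mm powr p * indicat_real (ball (cen k) \<delta>) x)" using ib by simp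
    fix x
    show "mm powr p * indicat_real (ball (cen k) \<delta>) x \<le> \<bar>tf k R m \<delta> x\<bar> powr p"
    proof (cases "x \<in> ball (cen k) \<delta>")
      case True
      then have nx: "norm (x - cen k) < \<delta>" by (simp add: dist_norm norm_minus_commute)
      define w where "w = wfn (cen k) \<delta> x"
      have w0: "w > 0" unfolding w_def by (rule wfn_pos[OF d])
      have w1: "w < 2 * \<delta>" unfolding w_def using wfn_le[OF d, of "cen k" x] nx by simp
      have "R / Suc m > 0" using R by simp
      then have wR: "w \<le> R" using w1 mm by simp
      have "tf k R m \<delta> x \<ge> R - w - R / Suc m" unfolding tf_def w_def[symmetric]
        using gf_lower[OF R(1)] w0 wR by simp
      then have "mm \<le> \<bar>tf k R m \<delta> x\<bar>" unfolding mm_def using w1 by simp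
      then have "mm powr p \<le> \<bar>tf k R m \<delta> x\<bar> powr p" using mm0 p0 by (intro powr_mono2) auto
      then show ?thesis using True by simp
    next
      case False
      then show ?thesis by simp
    qed
  qed
  then show "(\<integral>x. \<bar>tf k R m \<delta> x\<bar> powr p \<partial>lborel) \<ge> (R - 2 * \<delta> - R / Suc m) powr p * measure lborel (ball (cen k) \<delta>)"
    unfolding mm_def by simp
qed

lemma upper_tf:
  assumes k: "k \<ge> 1" and R: "R > 0" "R < rr k" and m: "m \<ge> 1" and d: "\<delta> > 0" and p: "p \<ge> 1"
    and mm: "R - 2 * \<delta> - R / Suc m > 0"
  shows "Sset (sector k) p \<noteq> {}"
    "lambda1 (sector k) p \<le> measure lborel (cball (cen k) R) / ((R - 2 * \<delta> - R / Suc m) powr p * measure lborel (ball (cen k) \<delta>))"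
proof -
  define mm where "mm = R - 2 * \<delta> - R / Suc m"
  have mm0: "mm > 0" using mm mm_def by simp
  have phi: "tf k R m \<delta> \<in> Cc1 (sector k)" by (rule tf_Cc1[OF k R m d])
  have B: "measure lborel (ball (cen k) \<delta>) > 0" using d by simp
  have lo: "(\<integral>x. \<bar>tf k R m \<delta> x\<bar> powr p \<partial>lborel) \<ge> mm powr p * measure lborel (ball (cen k) \<delta>)"
    unfolding mm_def by (rule tf_bounds(2)[OF k R m d p mm])
  have hi: "(\<integral>x. norm (grad (tf k R m \<delta>) x) powr p \<partial>lborel) \<le> measure lborel (cball (cen k) R)"
    by (rule tf_bounds(1)[OF k R m d p mm])
  have pos0: "mm powr p * measure lborel (ball (cen k) \<delta>) > 0" using mm0 B by simp
  then have pos: "(\<integral>x. \<bar>tf k R m \<delta> x\<bar> powr p \<partial>lborel) > 0" using lo by linarith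
  show "Sset (sector k) p \<noteq> {}" by (rule upper_general(1)[OF phi p pos])
  have "lambda1 (sector k) p \<le> (\<integral>x. norm (grad (tf k R m \<delta>) x) powr p \<partial>lborel) / (\<integral>x. \<bar>tf k R m \<delta> x\<bar> powr p \<partial>lborel)"
    by (rule upper_general(2)[OF phi p pos])
  also have "\<dots> \<le> measure lborel (cball (cen k) R) / (mm powr p * measure lborel (ball (cen k) \<delta>))"
    using hi lo pos0 by (intro frac_le) (auto intro!: integral_nonneg_AE)
  finally show "lambda1 (sector k) p \<le> measure lborel (cball (cen k) R) / ((R - 2 * \<delta> - R / Suc m) powr p * measure lborel (ball (cen k) \<delta>))"
    unfolding mm_def .
qed


lemma lim_powr_inv:
  assumes "a > 0"
  shows "((\<lambda>p::real. a powr (1 / p)) \<longlongrightarrow> 1) at_top"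
proof -
  have "((\<lambda>p::real. 1 / p) \<longlongrightarrow> 0) at_top"
    using tendsto_inverse_0_at_top[OF filterlim_ident] by (simp add: divide_inverse)
  then have "((\<lambda>p::real. a powr (1 / p)) \<longlongrightarrow> a powr 0) at_top"
    using assms by (intro tendsto_intros) auto
  then show ?thesis using assms by simp
qed

lemma Sset_ne:
  assumes k: "k \<ge> 1" and p: "p \<ge> 1"
  shows "Sset (sector k) p \<noteq> {}"
proof -
  define R where "R = rr k / 2"
  have r: "rr k > 0" using rr_pos[OF k] .
  have R: "R > 0" "R < rr k" unfolding R_def using r by auto
  have mm: "R - 2 * (R / 8) - R / Suc 3 > 0" using R by simp
  show ?thesis by (rule upper_tf(1)[OF k R _ _ p mm]) (use R in auto)
qed

lemma lower_root:
  assumes k: "k \<ge> 1" and p: "p \<ge> 1"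
  shows "lambda1 (sector k) p powr (1 / p) \<ge> 1 / (3 powr (1 / p) * rr k)" "lambda1 (sector k) p > 0"
proof -
  have r: "rr k > 0" using rr_pos[OF k] .
  have p0: "p > 0" using p by simp
  have lo: "lambda1 (sector k) p \<ge> 1 / (3 * rr k powr p)" by (rule lower_general[OF k p Sset_ne[OF k p]])
  have pos: "1 / (3 * rr k powr p) > 0" using r by simp
  then show "lambda1 (sector k) p > 0" using lo by linarith
  have "(1 / (3 * rr k powr p)) powr (1 / p) \<le> lambda1 (sector k) p powr (1 / p)"
    using lo pos p0 by (intro powr_mono2) auto
  moreover have "(1 / (3 * rr k powr p)) powr (1 / p) = 1 / (3 powr (1 / p) * rr k)"
    using r p0 by (simp add: powr_divide powr_mult powr_powr)
  ultimately show "lambda1 (sector k) p powr (1 / p) \<ge> 1 / (3 powr (1 / p) * rr k)" by simp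
qed

lemma upper_root:
  assumes k: "k \<ge> 1" and a: "a > 1 / rr k"
  shows "eventually (\<lambda>p. lambda1 (sector k) p powr (1 / p) < a) at_top"
proof -
  have r: "rr k > 0" using rr_pos[OF k] .
  have a0: "a > 0" using a r by (smt (verit) divide_pos_pos)
  define \<epsilon> where "\<epsilon> = rr k - 1 / a"
  have "1 / a < rr k" using a r a0 by (simp add: field_simps)
  then have e: "\<epsilon> > 0" unfolding \<epsilon>_def by simp
  have e2: "\<epsilon> \<le> rr k" unfolding \<epsilon>_def using a0 by simp
  define R where "R = rr k - \<epsilon> / 4"
  define \<delta> where "\<delta> = \<epsilon> / 16"
  have R: "R > 0" "R < rr k" unfolding R_def using e e2 by auto
  have d: "\<delta> > 0" unfolding \<delta>_def using e by simp
  obtain n :: nat where n: "4 * R / \<epsilon> < real n" using reals_Archimedean2 by blast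
  define m where "m = max n 1"
  have m: "m \<ge> 1" unfolding m_def by simp
  have "R / Suc m < \<epsilon> / 4"
  proof -
    have "4 * R / \<epsilon> < real (Suc m)" using n unfolding m_def by simp
    then have "4 * R < real (Suc m) * \<epsilon>" using e by (simp add: field_simps)
    then show ?thesis by (simp add: field_simps)
  qed
  moreover have "1 / a = rr k - \<epsilon>" unfolding \<epsilon>_def by simp
  ultimately have mmgt: "R - 2 * \<delta> - R / Suc m > 1 / a" using R_def \<delta>_def e by linarith
  define mm where "mm = R - 2 * \<delta> - R / Suc m"
  have mm0: "mm > 0" using mmgt a0 mm_def by (smt (verit) divide_pos_pos)
  have h: "1 / a < mm" using mmgt unfolding mm_def .
  have h1: "1 < mm * a" using h a0 by (simp add: divide_less_eq)
  have mma: "1 / mm < a" using h1 mm0 by (simp add: divide_less_eq mult.commute)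
  define A where "A = measure lborel (cball (cen k) R)"
  define B where "B = measure lborel (ball (cen k) \<delta>)"
  have A: "A > 0" unfolding A_def using R by simp
  have B: "B > 0" unfolding B_def using d by simp
  have lim: "((\<lambda>p. A powr (1 / p) / (mm * B powr (1 / p))) \<longlongrightarrow> 1 / (mm * 1)) at_top"
    using lim_powr_inv[OF A] lim_powr_inv[OF B] mm0 by (intro tendsto_intros) auto
  then have ev1: "eventually (\<lambda>p. A powr (1 / p) / (mm * B powr (1 / p)) < a) at_top"
    using mma by (intro order_tendstoD(2)[OF lim]) simp
  show ?thesis
    using ev1 eventually_ge_at_top[of "1::real"]
  proof eventually_elim
    case (elim p)
    have p0: "p > 0" using elim by simp
    have up: "lambda1 (sector k) p \<le> A / (mm powr p * B)"
      unfolding A_def B_def mm_def by (rule upper_tf(2)[OF k R m d elim(2) mm0[unfolded mm_def]])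
    have "lambda1 (sector k) p powr (1 / p) \<le> (A / (mm powr p * B)) powr (1 / p)"
      using up lower_root(2)[OF k elim(2)] p0 by (intro powr_mono2) auto
    also have "\<dots> = A powr (1 / p) / (mm * B powr (1 / p))"
      using A B mm0 p0 by (simp add: powr_divide powr_mult powr_powr)
    finally show ?case using elim(1) by simp
  qed
qed

theorem lemma2p6:
  fixes k :: real
  assumes "k \<ge> 1"
  shows "((\<lambda>p. lambda1 (sector k) p powr (1 / p)) \<longlongrightarrow>
           (1 + sin (pi / (2 * k))) / sin (pi / (2 * k))) at_top"
proof -
  have k: "k \<ge> 1" using assms .
  have r: "rr k > 0" using rr_pos[OF k] .
  have s: "sb k > 0" using sb_pos[OF k] by simp
  have L: "(1 + sin (pi / (2 * k))) / sin (pi / (2 * k)) = 1 / rr k"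
    unfolding rr_def sb_def[symmetric] using s by simp
  show ?thesis unfolding L
  proof (rule order_tendstoI)
    fix a assume a: "a < 1 / rr k"
    have lim: "((\<lambda>p. 1 / (3 powr (1 / p) * rr k)) \<longlongrightarrow> 1 / (1 * rr k)) at_top"
      using lim_powr_inv[of 3] r by (intro tendsto_intros) auto
    have "eventually (\<lambda>p. a < 1 / (3 powr (1 / p) * rr k)) at_top"
      using a by (intro order_tendstoD(1)[OF lim]) simp
    then show "eventually (\<lambda>p. a < lambda1 (sector k) p powr (1 / p)) at_top"
      using eventually_ge_at_top[of "1::real"]
      by eventually_elim (use lower_root(1)[OF k] in force)
  next
    fix a assume "a > 1 / rr k"
    then show "eventually (\<lambda>p. lambda1 (sector k) p powr (1 / p) < a) at_top"
      by (rule upper_root[OF k])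
  qed
qed


end
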